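(* Let $\phi=(\text{B-code})^{-1}\circ(\text{A-code}):\mathsf{G}_{r,n}\to\mathsf{G}_{r,n}$. For every $\pi\in\mathsf{G}_{r,n}$, $$\bigl(\ell,\mathsf{Rmil}^0,\mathsf{Rmil}^1,\dots,\mathsf{Rmil}^{r-1},\mathsf{Lmil}^0,\dots,\mathsf{Lmil}^{r-1},\mathsf{Lmal}^0,\dots,\mathsf{Lmal}^{r-1},\mathsf{Lmap}^0,\dots,\mathsf{Lmap}^{r-1}\bigr)(\pi)$$ equals $$\bigl(\mathsf{sor},\mathsf{Cyc}^0,\mathsf{Cyc}^{r-1},\dots,\mathsf{Cyc}^{1},\mathsf{Lmic}^0,\mathsf{Lmic}^{r-1},\dots,\mathsf{Lmic}^1,\mathsf{Lmal}^0,\mathsf{Lmal}^{r-1},\dots,\mathsf{Lmal}^1,\mathsf{Lmap}^0,\mathsf{Lmap}^{r-1},\dots,\mathsf{Lmap}^1\bigr)(\phi(\pi)),$$ i.e. $\ell(\pi)=\mathsf{sor}(\phi(\pi))$ and, for every $t\in\mathbb Z/r$, $\mathsf{Rmil}^t(\pi)=\mathsf{Cyc}^{-t}(\phi(\pi))$, $\mathsf{Lmil}^t(\pi)=\mathsf{Lmic}^{-t}(\phi(\pi))$, $\mathsf{Lmal}^t(\pi)=\mathsf{Lmal}^{-t}(\phi(\pi))$, $\mathsf{Lmap}^t(\pi)=\mathsf{Lmap}^{-t}(\phi(\pi))$.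
   Context: $\mathsf{G}_{r,n}=C_r\wr\mathfrak S_n$: pairs $(\sigma,\mathbf z)$, $\sigma\in\mathfrak S_n$, $\mathbf z\in(\mathbb Z/r)^n$, written $\pi=\sigma_1^{[z_1]}\cdots\sigma_n^{[z_n]}$ (colors in $\{0,\dots,r-1\}$, read mod $r$); product $(\sigma,\mathbf z)(\rho,\mathbf w)=(\sigma\rho,\mathbf w+\rho(\mathbf z))$, $\rho(\mathbf z)=(z_{\rho(1)},\dots,z_{\rho(n)})$; $\pi$ acts on $\{i^{[t]}\}$ by $\pi(i^{[t]})=\sigma_i^{[z_i+t]}$, and $i^{[0]}=i$. $\ell(\pi)$: minimal number of factors in an expression of $\pi$ as a product of $s_0=1^{[1]}2\cdots n$ and $s_i$ ($1\le i<n$; base permutation $(i\ i+1)$, colors $0$). For $1\le i<j$, right multiplication of a word $\tau_1^{[y_1]}\cdots\tau_j^{[y_j]}$ by $(i^{[t]}\,j)$ replaces the letter at position $j$ by $\tau_i^{[y_i+t]}$ and that at position $i$ by $\tau_j^{[y_j-t]}$. $\mathsf{CS}_{r,n}=\{(c_1^{[e_1]},\dots,c_n^{[e_n]}):1\le c_i\le i,\ 0\le e_i<r\}$. A-code: $\pi^{(n)}=\pi$; for $j=n,\dots,1$, if base value $j$ is at position $p$ of $\pi^{(j)}$ with color $t$, set $c_j=p,e_j=t$ and delete it to get $\pi^{(j-1)}$. B-code: $\pi^{(n)}=\pi$; for $j=n,\dots,1$, $c_j$ = position of base value $j$ in $\pi^{(j)}$, $z$ its color, $e_j\equiv-z\pmod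 r$; $\pi^{(j-1)}$ = first $j-1$ letters of $\pi^{(j)}\cdot(c_j^{[e_j]}\,j)$ if $c_j<j$, of $\pi^{(j)}$ if $c_j=j$. Both codes are bijections $\mathsf{G}_{r,n}\to\mathsf{CS}_{r,n}$. $\mathsf{sor}(\pi)=\sum_j\bigl(j-c_j+\chi(e_j>0)(2(c_j-1)+e_j)\bigr)$ with $(c_j^{[e_j]})=\text{B-code}(\pi)$ (total distance of the paper's sorting process), $\chi$ the indicator. Statistics: $\mathsf{Rmil}(\pi)=\{\sigma_i^{[z_i]}:\sigma_i<\sigma_j\,\forall j>i\}$, $\mathsf{Lmil}(\pi)=\{\sigma_i^{[z_i]}:\sigma_i<\sigma_j\,\forall j<i\}$, $\mathsf{Lmal}(\pi)=\{\sigma_i^{[z_i]}:\sigma_i>\sigma_j\,\forall j<i\}$, $\mathsf{Lmap}(\pi)=\{i^{[z_i]}:\sigma_i>\sigma_j\,\forall j<i\}$; $\mathsf{Cyc}(\pi)$ = set of $\alpha^{[c]}$ over cycles of $\sigma$ with element set $B$, $\alpha=\min B$, $c\equiv\sum_{k\in B}z_k$; $\mathsf{Lmic}(\pi)$ = set of letters of the word $\pi(1)\pi^2(1)\cdots\pi^m(1)$ ($m\ge1$ least with $\pi^m(1)=1$) whose base value is smaller than those of all earlier letters. For a set $S$ of colored letters, $S^t=\{k:k^{[t]}\in S\}$. *)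

theory Defs
  imports Main
begin

text \<open>A colored permutation pi = sigma_1^[z_1] ... sigma_n^[z_n] of G_{r,n} is represented by
  the list of its letters [(sigma_1,z_1), ..., (sigma_n,z_n)]; base values in {1..n},
  colors in {0..<r}.  List index i (0-based) corresponds to position i+1.\<close>

type_synonym cword = "(nat \<times> nat) list"

definition cperms :: "nat \<Rightarrow> nat \<Rightarrow> cword set" where
  "cperms r n = {w. length w = n \<and> distinct (map fst w) \<and> set (map fst w) = {1..n}
                    \<and> (\<forall>x\<in>set w. snd x < r)}"

definition cneg :: "nat \<Rightarrow> nat \<Rightarrow> nat" where
  "cneg r t = (r - t mod r) mod r"

text \<open>Product (sigma,z)(rho,w) = (sigma rho, w + rho(z)): the letter at position i of the
  product is sigma_{rho_i}^[z_{rho_i} + w_i].\<close>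
definition cmul :: "nat \<Rightarrow> cword \<Rightarrow> cword \<Rightarrow> cword" where
  "cmul r u v = map (\<lambda>(a, c). (fst (u ! (a - 1)), (snd (u ! (a - 1)) + c) mod r)) v"

definition cid :: "nat \<Rightarrow> cword" where
  "cid n = map (\<lambda>k. (k, 0)) [1..<n+1]"

definition gen0 :: "nat \<Rightarrow> nat \<Rightarrow> cword" where
  "gen0 r n = (cid n)[0 := (1, 1 mod r)]"

definition geni :: "nat \<Rightarrow> nat \<Rightarrow> cword" where
  "geni n i = (cid n)[i - 1 := (i + 1, 0), i := (i, 0)]"

definition gens :: "nat \<Rightarrow> nat \<Rightarrow> cword set" where
  "gens r n = {gen0 r n} \<union> {geni n i | i. 1 \<le> i \<and> i < n}"

definition clen :: "nat \<Rightarrow> nat \<Rightarrow> cword \<Rightarrow> nat" where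
  "clen r n w = (LEAST k. \<exists>gs. length gs = k \<and> set gs \<subseteq> gens r n \<and>
                      foldl (cmul r) (cid n) gs = w)"

text \<open>0-based position of the letter with base value k\<close>
definition posof :: "nat \<Rightarrow> cword \<Rightarrow> nat" where
  "posof k w = (LEAST i. i < length w \<and> fst (w ! i) = k)"

text \<open>A-code; the result list has (c_j, e_j) at index j-1.\<close>
fun acode_aux :: "nat \<Rightarrow> cword \<Rightarrow> (nat \<times> nat) list" where
  "acode_aux 0 w = []"
| "acode_aux (Suc j) w =
     (let p = posof (Suc j) w
      in acode_aux j (take p w @ drop (Suc p) w) @ [(p + 1, snd (w ! p))])"

definition acode :: "cword \<Rightarrow> (nat \<times> nat) list" where
  "acode w = acode_aux (length w) w"

text \<open>Right multiplication of a word by the colored transposition (i^[t] j), i < j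
  (1-based positions): the letter at position j becomes tau_i^[y_i + t] and the letter at
  position i becomes tau_j^[y_j - t].\<close>
definition rtransp :: "nat \<Rightarrow> cword \<Rightarrow> nat \<Rightarrow> nat \<Rightarrow> nat \<Rightarrow> cword" where
  "rtransp r w i t j =
     w[j - 1 := (fst (w ! (i - 1)), (snd (w ! (i - 1)) + t) mod r),
       i - 1 := (fst (w ! (j - 1)), (snd (w ! (j - 1)) + cneg r t) mod r)]"

text \<open>B-code; the result list has (c_j, e_j) at index j-1.\<close>
fun bcode_aux :: "nat \<Rightarrow> nat \<Rightarrow> cword \<Rightarrow> (nat \<times> nat) list" where
  "bcode_aux r 0 w = []"
| "bcode_aux r (Suc j) w =
     (let c = posof (Suc j) w + 1; z = snd (w ! (c - 1)); e = cneg r z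
      in bcode_aux r j (if c < Suc j then take j (rtransp r w c e (Suc j)) else take j w)
         @ [(c, e)])"

definition bcode :: "nat \<Rightarrow> cword \<Rightarrow> (nat \<times> nat) list" where
  "bcode r w = bcode_aux r (length w) w"

definition phi :: "nat \<Rightarrow> nat \<Rightarrow> cword \<Rightarrow> cword" where
  "phi r n w = (THE u. u \<in> cperms r n \<and> bcode r u = acode w)"

definition sor :: "nat \<Rightarrow> cword \<Rightarrow> nat" where
  "sor r w = (\<Sum>j = 1..length w. let (c, e) = bcode r w ! (j - 1) in
                 j - c + (if e > 0 then 2 * (c - 1) + e else 0))"

text \<open>Statistics, already restricted to color t (the sets S^t).\<close>
definition Rmil :: "nat \<Rightarrow> cword \<Rightarrow> nat set" where
  "Rmil t w = {fst (w ! i) | i. i < length w \<and> snd (w ! i) = t \<and>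
                 (\<forall>j. i < j \<and> j < length w \<longrightarrow> fst (w ! i) < fst (w ! j))}"

definition Lmil :: "nat \<Rightarrow> cword \<Rightarrow> nat set" where
  "Lmil t w = {fst (w ! i) | i. i < length w \<and> snd (w ! i) = t \<and>
                 (\<forall>j < i. fst (w ! i) < fst (w ! j))}"

definition Lmal :: "nat \<Rightarrow> cword \<Rightarrow> nat set" where
  "Lmal t w = {fst (w ! i) | i. i < length w \<and> snd (w ! i) = t \<and>
                 (\<forall>j < i. fst (w ! i) > fst (w ! j))}"

definition Lmap :: "nat \<Rightarrow> cword \<Rightarrow> nat set" where
  "Lmap t w = {i + 1 | i. i < length w \<and> snd (w ! i) = t \<and>
                 (\<forall>j < i. fst (w ! i) > fst (w ! j))}"

definition bperm :: "cword \<Rightarrow> nat \<Rightarrow> nat" where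
  "bperm w k = fst (w ! (k - 1))"

definition cycle_of :: "cword \<Rightarrow> nat \<Rightarrow> nat set" where
  "cycle_of w k = {(bperm w ^^ m) k | m. True}"

definition Cyc :: "nat \<Rightarrow> nat \<Rightarrow> cword \<Rightarrow> nat set" where
  "Cyc r c w = {Min (cycle_of w k) | k. 1 \<le> k \<and> k \<le> length w \<and>
                 (\<Sum>i\<in>cycle_of w k. snd (w ! (i - 1))) mod r = c}"

definition cact :: "nat \<Rightarrow> cword \<Rightarrow> nat \<times> nat \<Rightarrow> nat \<times> nat" where
  "cact r w x = (fst (w ! (fst x - 1)), (snd (w ! (fst x - 1)) + snd x) mod r)"

definition Lmic :: "nat \<Rightarrow> nat \<Rightarrow> cword \<Rightarrow> nat set" where
  "Lmic r t w =
     (let m0 = (LEAST m. 1 \<le> m \<and> (cact r w ^^ m) (1, 0) = (1, 0))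
      in {fst ((cact r w ^^ m) (1, 0)) | m. 1 \<le> m \<and> m \<le> m0 \<and>
            snd ((cact r w ^^ m) (1, 0)) = t \<and>
            (\<forall>m'. 1 \<le> m' \<and> m' < m \<longrightarrow>
               fst ((cact r w ^^ m) (1, 0)) < fst ((cact r w ^^ m') (1, 0)))})"

end

theory Submission
  imports Defs
begin

lemma cneg_lt: "0 < r \<Longrightarrow> cneg r t < r"
  by (simp add: cneg_def)

lemma cneg_cneg: "t < r \<Longrightarrow> cneg r (cneg r t) = t"
  by (cases "t = 0") (auto simp: cneg_def)

lemma cneg_inj: "t < r \<Longrightarrow> s < r \<Longrightarrow> cneg r t = cneg r s \<longleftrightarrow> t = s"
  by (metis cneg_cneg)

lemma cneg_add: "0 < r \<Longrightarrow> (e + cneg r e) mod r = 0"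
proof -
  assume r: "0 < r"
  have "(e + cneg r e) mod r = (e mod r + (r - e mod r) mod r) mod r"
    by (simp add: cneg_def mod_add_left_eq)
  also have "\<dots> = (e mod r + (r - e mod r)) mod r"
    by (simp add: mod_add_right_eq)
  also have "\<dots> = 0" using r by simp
  finally show ?thesis .
qed

lemma cneg_fix: "0 < r \<Longrightarrow> z < r \<Longrightarrow> ((z + e) mod r + cneg r e) mod r = z"
proof -
  assume r: "0 < r" and z: "z < r"
  have "((z + e) mod r + cneg r e) mod r = (z + (e + cneg r e)) mod r"
    by (simp add: mod_add_left_eq add.assoc)
  also have "\<dots> = (z + (e + cneg r e) mod r) mod r" by (simp add: mod_add_right_eq)
  also have "\<dots> = z" using cneg_add[OF r] z by simp
  finally show ?thesis .
qed

lemma cneg_fix2: "0 < r \<Longrightarrow> ((z + e) mod r + (cneg r e + a) mod r) mod r = (z + a) mod r"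
proof -
  assume r: "0 < r"
  have "((z + e) mod r + (cneg r e + a) mod r) mod r = ((z + a) + (e + cneg r e)) mod r"
    by (simp add: mod_add_eq algebra_simps)
  also have "\<dots> = ((z + a) + (e + cneg r e) mod r) mod r" by (simp add: mod_add_right_eq)
  also have "\<dots> = (z + a) mod r" using cneg_add[OF r] by simp
  finally show ?thesis .
qed

lemma cperms_iff: "w \<in> cperms r n \<longleftrightarrow> length w = n \<and> distinct (map fst w) \<and>
    set (map fst w) = {1..n} \<and> (\<forall>i<n. snd (w!i) < r)"
  unfolding cperms_def mem_Collect_eq all_set_conv_all_nth by auto

lemma cp_len: "w \<in> cperms r n \<Longrightarrow> length w = n" by (simp add: cperms_iff)
lemma cp_dist: "w \<in> cperms r n \<Longrightarrow> distinct (map fst w)" by (simp add: cperms_iff)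
lemma cp_col: "w \<in> cperms r n \<Longrightarrow> i < n \<Longrightarrow> snd (w!i) < r" by (simp add: cperms_iff)
lemma cp_val: "w \<in> cperms r n \<Longrightarrow> i < n \<Longrightarrow> 1 \<le> fst (w!i) \<and> fst (w!i) \<le> n"
proof -
  assume w: "w \<in> cperms r n" and i: "i < n"
  hence "fst (w!i) \<in> set (map fst w)" by (auto simp: cperms_iff)
  thus ?thesis using w by (auto simp: cperms_iff)
qed
lemma cp_inj: "w \<in> cperms r n \<Longrightarrow> i < n \<Longrightarrow> j < n \<Longrightarrow> fst (w!i) = fst (w!j) \<Longrightarrow> i = j"
proof -
  assume w: "w \<in> cperms r n" and "i < n" "j < n" "fst (w!i) = fst (w!j)"
  moreover have "distinct (map fst w)" "length w = n" using w by (auto simp: cperms_iff)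
  ultimately show ?thesis by (metis distinct_conv_nth length_map nth_map)
qed
lemma cp_surj: "w \<in> cperms r n \<Longrightarrow> 1 \<le> k \<Longrightarrow> k \<le> n \<Longrightarrow> \<exists>i<n. fst (w!i) = k"
proof -
  assume w: "w \<in> cperms r n" and "1 \<le> k" "k \<le> n"
  hence "k \<in> set (map fst w)" by (auto simp: cperms_iff)
  then obtain i where "i < length (map fst w)" "map fst w ! i = k" by (metis in_set_conv_nth)
  thus ?thesis using w by (auto simp: cperms_iff)
qed

lemma posof_eq: "w \<in> cperms r n \<Longrightarrow> i < n \<Longrightarrow> fst (w!i) = k \<Longrightarrow> posof k w = i"
  unfolding posof_def
  apply (rule Least_equality)
  using cp_inj[of w r n] cp_len[of w r n] by force+

definition insA :: "cword \<Rightarrow> nat \<Rightarrow> nat \<Rightarrow> cword" where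
  "insA w p e = take (p-1) w @ (Suc (length w), e) # drop (p-1) w"

definition insB :: "nat \<Rightarrow> cword \<Rightarrow> nat \<Rightarrow> nat \<Rightarrow> cword" where
  "insB r u p e = (if p = Suc (length u) then u @ [(Suc (length u), cneg r e)]
     else (u @ [(Suc (length u), 0)])[length u := (fst (u!(p-1)), (snd (u!(p-1)) + e) mod r),
                                      p-1 := (Suc (length u), cneg r e)])"

lemma insA_len: "length (insA w p e) = Suc (length w)"
  by (simp add: insA_def)

lemma insA_nth: "1 \<le> p \<Longrightarrow> p \<le> Suc (length w) \<Longrightarrow> i < Suc (length w) \<Longrightarrow>
  insA w p e ! i = (if i < p - 1 then w ! i else if i = p - 1 then (Suc (length w), e) else w ! (i - 1))"
  by (auto simp: insA_def nth_append min_def nth_Cons' less_diff_conv not_less)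

lemma insB_len: "length (insB r u p e) = Suc (length u)"
  by (simp add: insB_def)

lemma insB_nth: "1 \<le> p \<Longrightarrow> p \<le> Suc (length u) \<Longrightarrow> i < Suc (length u) \<Longrightarrow>
  insB r u p e ! i = (if i = p - 1 then (Suc (length u), cneg r e)
     else if i = length u then (fst (u!(p-1)), (snd (u!(p-1)) + e) mod r) else u ! i)"
  by (auto simp: insB_def nth_append nth_list_update)

lemma dist_ins: "distinct (x # xs) \<Longrightarrow> distinct (take k xs @ x # drop k xs)"
proof -
  assume a: "distinct (x # xs)"
  hence d: "distinct (take k xs @ drop k xs)" by simp
  have "x \<notin> set (take k xs)" "x \<notin> set (drop k xs)" using a by (auto dest: in_set_takeD in_set_dropD)
  thus ?thesis using d by (simp only: distinct_append distinct.simps set_append) auto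
qed

lemma insA_in:
  assumes w: "w \<in> cperms r m" and p: "1 \<le> p" "p \<le> Suc m" and e: "e < r"
  shows "insA w p e \<in> cperms r (Suc m)"
proof -
  have lw: "length w = m" using w by (rule cp_len)
  have mf: "map fst (insA w p e) = take (p-1) (map fst w) @ Suc m # drop (p-1) (map fst w)"
    by (simp add: insA_def lw take_map drop_map)
  have nm: "Suc m \<notin> set (map fst w)" using w by (auto simp: cperms_iff)
  have d: "distinct (map fst (insA w p e))" unfolding mf
    by (rule dist_ins) (use nm cp_dist[OF w] in auto)
  have "set (map fst (insA w p e)) = insert (Suc m) (set (take (p-1) (map fst w)) \<union> set (drop (p-1) (map fst w)))"
    unfolding mf by auto
  also have "\<dots> = insert (Suc m) (set (map fst w))"
    by (metis append_take_drop_id set_append)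
  also have "\<dots> = {1..Suc m}" using w by (auto simp: cperms_iff)
  finally have s: "set (map fst (insA w p e)) = {1..Suc m}" .
  have c: "\<forall>i<Suc m. snd (insA w p e ! i) < r"
  proof (intro allI impI)
    fix i assume "i < Suc m"
    thus "snd (insA w p e ! i) < r" using p e cp_col[OF w] by (auto simp: insA_nth lw)
  qed
  show ?thesis using d s c by (simp add: cperms_iff insA_len lw)
qed

lemma acode_insA:
  assumes w: "w \<in> cperms r m" and p: "1 \<le> p" "p \<le> Suc m" and e: "e < r"
  shows "acode (insA w p e) = acode w @ [(p, e)]"
proof -
  have lw: "length w = m" using w by (rule cp_len)
  have W: "insA w p e \<in> cperms r (Suc m)" by (rule insA_in[OF w p e])
  have po: "posof (Suc m) (insA w p e) = p - 1"
    by (rule posof_eq[OF W]) (use p in \<open>auto simp: insA_nth lw\<close>)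
  have tk: "take (p-1) (insA w p e) @ drop (Suc (p-1)) (insA w p e) = w"
    using p lw by (simp add: insA_def)
  have sn: "snd (insA w p e ! (p-1)) = e" using p lw by (simp add: insA_nth)
  show ?thesis
    unfolding acode_def insA_len lw using po tk sn p by (simp add: Let_def)
qed

lemma decompA:
  assumes w: "w \<in> cperms r (Suc m)"
  shows "\<exists>w' p e. w' \<in> cperms r m \<and> 1 \<le> p \<and> p \<le> Suc m \<and> e < r \<and> w = insA w' p e"
proof -
  obtain q where q: "q < Suc m" "fst (w!q) = Suc m" using cp_surj[OF w, of "Suc m"] by auto
  have lw: "length w = Suc m" using w by (rule cp_len)
  define w' where "w' = take q w @ drop (Suc q) w"
  have lw': "length w' = m" using q lw by (simp add: w'_def)
  have wq: "w!q = (Suc m, snd (w!q))" using q by (cases "w!q") auto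
  have eq: "insA w' (q+1) (snd (w!q)) = w"
  proof -
    have "insA w' (q+1) (snd (w!q)) = take q w @ w!q # drop (Suc q) w"
      using q lw lw' wq by (simp add: insA_def w'_def)
    also have "\<dots> = w" using q lw by (simp add: id_take_nth_drop[symmetric])
    finally show ?thesis .
  qed
  have mw: "map fst w = map fst (take q w) @ Suc m # map fst (drop (Suc q) w)"
    using q lw by (metis (no_types) id_take_nth_drop list.simps(9) map_append)
  have dw: "distinct (map fst w)" using w by (rule cp_dist)
  have d': "distinct (map fst w')" using dw unfolding mw by (simp add: w'_def)
  have nm: "Suc m \<notin> set (map fst w')" using dw unfolding mw by (simp add: w'_def)
  have "set (map fst w) = insert (Suc m) (set (map fst w'))" unfolding mw w'_def by auto
  hence "insert (Suc m) (set (map fst w')) = {1..Suc m}" using w by (simp add: cperms_iff)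
  hence "set (map fst w') = {1..Suc m} - {Suc m}" using nm by (metis Diff_insert_absorb)
  hence s': "set (map fst w') = {1..m}" by auto
  have c': "\<forall>x\<in>set w'. snd x < r" using w unfolding w'_def cperms_def
    by (auto dest: in_set_takeD in_set_dropD)
  have "w' \<in> cperms r m" using lw' d' s' c' by (simp add: cperms_def)
  moreover have "snd (w!q) < r" using cp_col[OF w q(1)] .
  ultimately show ?thesis using eq q by (intro exI[of _ w'] exI[of _ "q+1"] exI[of _ "snd (w!q)"]) auto
qed

lemma insB_in:
  assumes u: "u \<in> cperms r m" and p: "1 \<le> p" "p \<le> Suc m" and e: "e < r" and r: "0 < r"
  shows "insB r u p e \<in> cperms r (Suc m)"
proof -
  have lu: "length u = m" using u by (rule cp_len)
  have c: "\<forall>i<Suc m. snd (insB r u p e ! i) < r"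
  proof (intro allI impI)
    fix i assume "i < Suc m"
    thus "snd (insB r u p e ! i) < r" using p r cp_col[OF u] by (auto simp: insB_nth lu cneg_lt)
  qed
  have nm: "Suc m \<notin> set (map fst u)" using u by (auto simp: cperms_iff)
  show ?thesis
  proof (cases "p = Suc m")
    case True
    have "map fst (insB r u p e) = map fst u @ [Suc m]" using True by (simp add: insB_def lu)
    moreover have "set (map fst u) = {1..m}" "distinct (map fst u)" using u by (auto simp: cperms_iff)
    ultimately have "distinct (map fst (insB r u p e))" "set (map fst (insB r u p e)) = {1..Suc m}"
      using nm by auto
    thus ?thesis using c by (simp add: cperms_iff insB_len lu)
  next
    case False
    define L where "L = map fst u @ [Suc m]"
    have pm: "p - 1 < m" using False p by simp
    have Lq: "L ! (p-1) = fst (u!(p-1))" using pm lu by (simp add: L_def nth_append)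
    have Lm: "L ! m = Suc m" using lu by (simp add: L_def nth_append)
    have mf: "map fst (insB r u p e) = L[m := L!(p-1), p-1 := L!m]"
      using False lu Lq Lm by (simp add: insB_def map_update L_def)
    have lL: "length L = Suc m" using lu by (simp add: L_def)
    have dL: "distinct L" using nm cp_dist[OF u] by (simp add: L_def)
    have sL: "set L = {1..Suc m}" using u by (auto simp: cperms_iff L_def)
    have "distinct (map fst (insB r u p e))" "set (map fst (insB r u p e)) = {1..Suc m}"
      unfolding mf using dL sL lL p False by auto
    thus ?thesis using c by (simp add: cperms_iff insB_len lu)
  qed
qed

lemma bcode_insB:
  assumes u: "u \<in> cperms r m" and p: "1 \<le> p" "p \<le> Suc m" and e: "e < r" and r: "0 < r"
  shows "bcode r (insB r u p e) = bcode r u @ [(p, e)]"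
proof -
  have lu: "length u = m" using u by (rule cp_len)
  have U: "insB r u p e \<in> cperms r (Suc m)" by (rule insB_in[OF u p e r])
  have po: "posof (Suc m) (insB r u p e) = p - 1"
    by (rule posof_eq[OF U]) (use p in \<open>auto simp: insB_nth lu\<close>)
  have sn: "snd (insB r u p e ! (p-1)) = cneg r e" using p lu by (simp add: insB_nth)
  have cc: "cneg r (cneg r e) = e" using e by (rule cneg_cneg)
  have red1: "p < Suc m \<Longrightarrow> take m (rtransp r (insB r u p e) p e (Suc m)) = u"
  proof -
    assume True: "p < Suc m"
    show "take m (rtransp r (insB r u p e) p e (Suc m)) = u"
    proof (rule nth_equalityI)
      show "length (take m (rtransp r (insB r u p e) p e (Suc m))) = length u"
        by (simp add: rtransp_def insB_len lu)
      fix i assume "i < length (take m (rtransp r (insB r u p e) p e (Suc m)))"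
      hence i: "i < m" by (simp add: rtransp_def insB_len lu)
      show "take m (rtransp r (insB r u p e) p e (Suc m)) ! i = u ! i"
        using i True p cneg_fix[OF r cp_col[OF u, of "p-1"]]
        by (auto simp: rtransp_def nth_list_update insB_len lu insB_nth)
    qed
  qed
  have red2: "take m (insB r u (Suc m) e) = u" using lu by (simp add: insB_def)
  show ?thesis
    unfolding bcode_def insB_len lu using po sn cc red1 red2 p
    by (simp add: Let_def lu[symmetric] del: bcode_aux.simps(1))
qed

lemma decompB:
  assumes u: "u \<in> cperms r (Suc m)" and r: "0 < r"
  shows "\<exists>u' p e. u' \<in> cperms r m \<and> 1 \<le> p \<and> p \<le> Suc m \<and> e < r \<and> u = insB r u' p e"
proof -
  obtain q where q: "q < Suc m" "fst (u!q) = Suc m" using cp_surj[OF u, of "Suc m"] by auto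
  have lu: "length u = Suc m" using u by (rule cp_len)
  define z where "z = snd (u!q)"
  have z: "z < r" using cp_col[OF u q(1)] by (simp add: z_def)
  have uq: "u!q = (Suc m, z)" using q by (cases "u!q") (auto simp: z_def)
  have du: "distinct (map fst u)" using u by (rule cp_dist)
  have su: "set (map fst u) = {1..Suc m}" using u by (simp add: cperms_iff)
  show ?thesis
  proof (cases "q = m")
    case True
    define u' where "u' = take m u"
    have lu': "length u' = m" using lu by (simp add: u'_def)
    have ueq: "u = u' @ [(Suc m, z)]"
      using lu True uq by (metis u'_def lessI take_Suc_conv_app_nth take_all order_refl)
    have "map fst u = map fst u' @ [Suc m]" using ueq by simp
    hence d': "distinct (map fst u')" and nm: "Suc m \<notin> set (map fst u')"
      and s: "insert (Suc m) (set (map fst u')) = {1..Suc m}" using du su by auto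
    have "set (map fst u') = {1..Suc m} - {Suc m}" using s nm by (metis Diff_insert_absorb)
    hence s': "set (map fst u') = {1..m}" by auto
    have c': "\<forall>x\<in>set u'. snd x < r" using u ueq unfolding cperms_def by auto
    have U': "u' \<in> cperms r m" using lu' d' s' c' by (simp add: cperms_def)
    have "insB r u' (Suc m) (cneg r z) = u" using ueq lu' cneg_cneg[OF z] by (simp add: insB_def)
    thus ?thesis using U' cneg_lt[OF r] by (intro exI[of _ u'] exI[of _ "Suc m"] exI[of _ "cneg r z"]) auto
  next
    case False
    hence qm: "q < m" using q by simp
    define u' where "u' = (take m u)[q := (fst (u!m), (snd (u!m) + z) mod r)]"
    have lu': "length u' = m" using lu by (simp add: u'_def)
    define L where "L = map fst u"
    define S where "S = L[q := L!m, m := L!q]"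
    have lL: "length L = Suc m" using lu by (simp add: L_def)
    have dL: "distinct L" and sL: "set L = {1..Suc m}" using du su by (auto simp: L_def)
    have dS: "distinct S" and sS: "set S = {1..Suc m}" using dL sL qm lL by (auto simp: S_def)
    have Sm: "S ! m = Suc m" using lL q by (simp add: S_def L_def)
    have lS: "length S = Suc m" using lL by (simp add: S_def)
    have Seq: "S = take m S @ [Suc m]" using lS Sm
      by (metis lessI take_Suc_conv_app_nth take_all order_refl)
    have mu': "map fst u' = take m S"
      using qm lL by (simp add: u'_def S_def L_def map_update take_map take_update_swap nth_append list_update_beyond)
    have d': "distinct (map fst u')" and nm: "Suc m \<notin> set (map fst u')"
      and s: "insert (Suc m) (set (map fst u')) = {1..Suc m}"
      using dS sS Seq unfolding mu' by (metis distinct_append, metis distinct_append disjoint_iff list.set_intros(1),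
          metis Un_insert_right list.set(1) list.simps(15) set_append sup_bot.right_neutral)
    have "set (map fst u') = {1..Suc m} - {Suc m}" using s nm by (metis Diff_insert_absorb)
    hence s': "set (map fst u') = {1..m}" by auto
    have c': "\<forall>i<m. snd (u'!i) < r"
    proof (intro allI impI)
      fix i assume "i < m" thus "snd (u'!i) < r" using cp_col[OF u] r lu qm by (auto simp: u'_def nth_list_update)
    qed
    have U': "u' \<in> cperms r m" using lu' d' s' c' by (simp add: cperms_iff)
    have "insB r u' (Suc q) (cneg r z) = u"
    proof (rule nth_equalityI)
      show "length (insB r u' (Suc q) (cneg r z)) = length u" by (simp add: insB_len lu' lu)
      fix i assume "i < length (insB r u' (Suc q) (cneg r z))"
      hence i: "i < Suc m" by (simp add: insB_len lu')
      have u'q: "u' ! q = (fst (u!m), (snd (u!m) + z) mod r)" using qm lu by (simp add: u'_def)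
      have cf: "((snd (u!m) + z) mod r + cneg r z) mod r = snd (u!m)"
        by (rule cneg_fix[OF r cp_col[OF u]]) simp
      show "insB r u' (Suc q) (cneg r z) ! i = u ! i"
        using i qm u'q cf uq cneg_cneg[OF z] lu'
        by (auto simp: insB_nth u'_def nth_list_update)
    qed
    thus ?thesis using U' cneg_lt[OF r] qm
      by (intro exI[of _ u'] exI[of _ "Suc q"] exI[of _ "cneg r z"]) auto
  qed
qed

lemma bcode_inj: "0 < r \<Longrightarrow> u1 \<in> cperms r n \<Longrightarrow> u2 \<in> cperms r n \<Longrightarrow> bcode r u1 = bcode r u2 \<Longrightarrow> u1 = u2"
proof (induction n arbitrary: u1 u2)
  case 0
  thus ?case by (simp add: cperms_iff)
next
  case (Suc m)
  obtain a p e where a: "a \<in> cperms r m" "1 \<le> p" "p \<le> Suc m" "e < r" "u1 = insB r a p e"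
    using decompB[OF Suc.prems(2) Suc.prems(1)] by blast
  obtain b p' e' where b: "b \<in> cperms r m" "1 \<le> p'" "p' \<le> Suc m" "e' < r" "u2 = insB r b p' e'"
    using decompB[OF Suc.prems(3) Suc.prems(1)] by blast
  have "bcode r a @ [(p, e)] = bcode r b @ [(p', e')]"
    using Suc.prems(4) a b bcode_insB[OF a(1-4) Suc.prems(1)] bcode_insB[OF b(1-4) Suc.prems(1)] by simp
  hence "bcode r a = bcode r b" "p = p'" "e = e'" by auto
  moreover have "a = b" using Suc.IH[OF Suc.prems(1) a(1) b(1)] calculation(1) .
  ultimately show ?case using a b by simp
qed

lemma bcode_ex: "0 < r \<Longrightarrow> w \<in> cperms r n \<Longrightarrow> \<exists>u \<in> cperms r n. bcode r u = acode w"
proof (induction n arbitrary: w)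
  case 0
  thus ?case by (auto simp: cperms_iff acode_def bcode_def)
next
  case (Suc m)
  obtain a p e where a: "a \<in> cperms r m" "1 \<le> p" "p \<le> Suc m" "e < r" "w = insA a p e"
    using decompA[OF Suc.prems(2)] by blast
  obtain b where b: "b \<in> cperms r m" "bcode r b = acode a" using Suc.IH[OF Suc.prems(1) a(1)] by blast
  show ?case using insB_in[OF b(1) a(2-4) Suc.prems(1)] bcode_insB[OF b(1) a(2-4) Suc.prems(1)]
      acode_insA[OF a(1-4)] b(2) a(5) by auto
qed

lemma phi_props:
  assumes r: "0 < r" and w: "w \<in> cperms r n"
  shows "phi r n w \<in> cperms r n \<and> bcode r (phi r n w) = acode w"
proof -
  have "\<exists>!u. u \<in> cperms r n \<and> bcode r u = acode w"
    using bcode_ex[OF r w] bcode_inj[OF r] by metis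
  thus ?thesis unfolding phi_def by (rule theI')
qed

lemma phi_eqI:
  assumes r: "0 < r" and w: "w \<in> cperms r n" and u: "u \<in> cperms r n" and b: "bcode r u = acode w"
  shows "phi r n w = u"
  using phi_props[OF r w] bcode_inj[OF r _ u] b by metis

lemma phi_insA:
  assumes w: "w \<in> cperms r m" and p: "1 \<le> p" "p \<le> Suc m" and e: "e < r" and r: "0 < r"
  shows "phi r (Suc m) (insA w p e) = insB r (phi r m w) p e"
proof -
  have P: "phi r m w \<in> cperms r m" "bcode r (phi r m w) = acode w" using phi_props[OF r w] by auto
  show ?thesis
    by (rule phi_eqI[OF r insA_in[OF w p e] insB_in[OF P(1) p e r]])
       (simp add: bcode_insB[OF P(1) p e r] acode_insA[OF w p e] P(2))
qed

definition LRM :: "nat \<Rightarrow> cword \<Rightarrow> (nat \<times> nat) set" where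
  "LRM t w = {(i, fst (w ! i)) | i. i < length w \<and> snd (w ! i) = t \<and>
                 (\<forall>j < i. fst (w ! j) < fst (w ! i))}"

lemma Lmal_LRM: "Lmal t w = snd ` LRM t w"
  unfolding Lmal_def LRM_def by (auto simp: image_def)

lemma Lmap_LRM: "Lmap t w = (\<lambda>x. fst x + 1) ` LRM t w"
  unfolding Lmap_def LRM_def by (auto simp: image_def)

lemma LRM_gen:
  assumes W: "W \<in> cperms r (Suc m)" and q: "q < Suc m" "q \<le> length w"
    and Wq: "W ! q = (Suc m, c0)" and pre: "\<And>i. i < q \<Longrightarrow> W ! i = w ! i"
  shows "LRM t W = {x \<in> LRM t w. fst x < q} \<union> (if c0 = t then {(q, Suc m)} else {})"
proof (intro set_eqI iffI)
  have lW: "length W = Suc m" using W by (rule cp_len)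
  fix x assume "x \<in> LRM t W"
  then obtain i where i: "x = (i, fst (W!i))" "i < Suc m" "snd (W!i) = t"
    "\<forall>j<i. fst (W!j) < fst (W!i)" unfolding LRM_def lW by blast
  consider (lt) "i < q" | (eq) "i = q" | (gt) "q < i" by linarith
  thus "x \<in> {x \<in> LRM t w. fst x < q} \<union> (if c0 = t then {(q, Suc m)} else {})"
  proof cases
    case lt
    have "x \<in> LRM t w" unfolding LRM_def using i lt pre q by (auto intro!: exI[of _ i])
    thus ?thesis using i lt by simp
  next
    case eq
    thus ?thesis using i Wq by simp
  next
    case gt
    have "fst (W!q) < fst (W!i)" using i gt by blast
    moreover have "fst (W!i) \<le> Suc m" using cp_val[OF W i(2)] by simp
    ultimately show ?thesis using Wq by simp
  qed
next
  have lW: "length W = Suc m" using W by (rule cp_len)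
  fix x assume x: "x \<in> {x \<in> LRM t w. fst x < q} \<union> (if c0 = t then {(q, Suc m)} else {})"
  show "x \<in> LRM t W"
  proof (cases "x \<in> LRM t w \<and> fst x < q")
    case True
    then obtain i where i: "x = (i, fst (w!i))" "i < length w" "snd (w!i) = t"
      "\<forall>j<i. fst (w!j) < fst (w!i)" "i < q" unfolding LRM_def by auto
    show ?thesis unfolding LRM_def lW using i pre q by (auto intro!: exI[of _ i])
  next
    case False
    hence x: "c0 = t" "x = (q, Suc m)" using x by (auto split: if_splits)
    have "\<forall>j<q. fst (W!j) < Suc m"
    proof (intro allI impI)
      fix j assume j: "j < q"
      have "fst (W!j) \<le> Suc m" using cp_val[OF W, of j] j q by simp
      moreover have "fst (W!j) \<noteq> Suc m" using cp_inj[OF W, of j q] j q Wq by auto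
      ultimately show "fst (W!j) < Suc m" by simp
    qed
    thus ?thesis unfolding LRM_def lW using x q Wq by (auto intro!: exI[of _ q])
  qed
qed

lemma LRM_insA:
  assumes w: "w \<in> cperms r m" and p: "1 \<le> p" "p \<le> Suc m" and e: "e < r"
  shows "LRM t (insA w p e) = {x \<in> LRM t w. fst x < p - 1} \<union> (if e = t then {(p - 1, Suc m)} else {})"
  using cp_len[OF w] p by (intro LRM_gen[OF insA_in[OF w p e]]) (auto simp: insA_nth)

lemma LRM_insB:
  assumes u: "u \<in> cperms r m" and p: "1 \<le> p" "p \<le> Suc m" and e: "e < r" and r: "0 < r"
  shows "LRM c (insB r u p e) = {x \<in> LRM c u. fst x < p - 1} \<union> (if cneg r e = c then {(p - 1, Suc m)} else {})"
  using cp_len[OF u] p by (intro LRM_gen[OF insB_in[OF u p e r]]) (auto simp: insB_nth)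

lemma Rmil_insA:
  assumes w: "w \<in> cperms r m" and p: "1 \<le> p" "p \<le> Suc m" and e: "e < r"
  shows "Rmil t (insA w p e) = Rmil t w \<union> (if p = Suc m \<and> e = t then {Suc m} else {})"
proof -
  have lw: "length w = m" using w by (rule cp_len)
  define W where "W = insA w p e"
  have lW: "length W = Suc m" by (simp add: W_def insA_len lw)
  have Wn: "\<And>i. i < Suc m \<Longrightarrow> W ! i = (if i < p - 1 then w ! i else if i = p - 1 then (Suc m, e) else w ! (i - 1))"
    using p lw by (simp add: W_def insA_nth)
  show ?thesis unfolding W_def[symmetric]
  proof (intro set_eqI iffI)
    fix v assume "v \<in> Rmil t W"
    then obtain i where i: "v = fst (W!i)" "i < Suc m" "snd (W!i) = t"
      and H: "\<forall>j. i < j \<and> j < Suc m \<longrightarrow> fst (W!i) < fst (W!j)" unfolding Rmil_def lW by blast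
    consider (lt) "i < p - 1" | (eq) "i = p - 1" | (gt) "p - 1 < i" by linarith
    thus "v \<in> Rmil t w \<union> (if p = Suc m \<and> e = t then {Suc m} else {})"
    proof cases
      case lt
      have "\<forall>j. i < j \<and> j < m \<longrightarrow> fst (w!i) < fst (w!j)"
      proof (intro allI impI)
        fix j assume j: "i < j \<and> j < m"
        show "fst (w!i) < fst (w!j)"
        proof (cases "j < p - 1")
          case True thus ?thesis using H[rule_format, of j] j lt Wn[of i] Wn[of j] by simp
        next
          case False thus ?thesis using H[rule_format, of "Suc j"] j lt Wn[of i] Wn[of "Suc j"] by simp
        qed
      qed
      hence "v \<in> Rmil t w" unfolding Rmil_def lw using i lt Wn[of i] p by (auto intro!: exI[of _ i])
      thus ?thesis by simp
    next
      case eq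
      have "p = Suc m"
      proof (rule ccontr)
        assume "p \<noteq> Suc m"
        hence "p - 1 < m" using p by simp
        hence "fst (W!i) < fst (W!(Suc (p-1)))" using H eq by simp
        moreover have "fst (W!(Suc (p-1))) = fst (w!(p-1))" using Wn[of "Suc (p-1)"] \<open>p - 1 < m\<close> by simp
        moreover have "fst (w!(p-1)) \<le> m" using cp_val[OF w \<open>p - 1 < m\<close>] by simp
        ultimately show False using Wn[of i] eq p by simp
      qed
      thus ?thesis using i eq Wn[of i] by simp
    next
      case gt
      have i1: "i - 1 < m" "p - 1 \<le> i - 1" using gt i by auto
      have "\<forall>j. i - 1 < j \<and> j < m \<longrightarrow> fst (w!(i-1)) < fst (w!j)"
      proof (intro allI impI)
        fix j assume j: "i - 1 < j \<and> j < m"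
        thus "fst (w!(i-1)) < fst (w!j)" using H[rule_format, of "Suc j"] gt Wn[of i] Wn[of "Suc j"] i by auto
      qed
      hence "v \<in> Rmil t w" unfolding Rmil_def lw using i gt Wn[of i] i1 by (auto intro!: exI[of _ "i - 1"])
      thus ?thesis by simp
    qed
  next
    fix v assume v: "v \<in> Rmil t w \<union> (if p = Suc m \<and> e = t then {Suc m} else {})"
    show "v \<in> Rmil t W"
    proof (cases "v \<in> Rmil t w")
      case True
      then obtain i where i: "v = fst (w!i)" "i < m" "snd (w!i) = t"
        and H: "\<forall>j. i < j \<and> j < m \<longrightarrow> fst (w!i) < fst (w!j)" unfolding Rmil_def lw by blast
      have vm: "v \<le> m" using cp_val[OF w i(2)] i by simp
      show ?thesis
      proof (cases "i < p - 1")
        case True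
        have "\<forall>j. i < j \<and> j < Suc m \<longrightarrow> fst (W!i) < fst (W!j)"
        proof (intro allI impI)
          fix j assume j: "i < j \<and> j < Suc m"
          consider (a) "j < p - 1" | (b) "j = p - 1" | (c) "p - 1 < j" by linarith
          thus "fst (W!i) < fst (W!j)"
          proof cases
            case a thus ?thesis using H[rule_format, of j] j True Wn[of i] Wn[of j] p by simp
          next
            case b thus ?thesis using j True Wn[of i] Wn[of j] vm i by simp
          next
            case c
            have "i < j - 1" "j - 1 < m" using c True j by auto
            thus ?thesis using H[rule_format, of "j - 1"] c True Wn[of i] Wn[of j] j by simp
          qed
        qed
        thus ?thesis unfolding Rmil_def lW using i True Wn[of i] by (auto intro!: exI[of _ i])
      next
        case False
        have "\<forall>j. Suc i < j \<and> j < Suc m \<longrightarrow> fst (W!(Suc i)) < fst (W!j)"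
        proof (intro allI impI)
          fix j assume j: "Suc i < j \<and> j < Suc m"
          have "i < j - 1" "j - 1 < m" using j by auto
          thus "fst (W!(Suc i)) < fst (W!j)" using H[rule_format, of "j - 1"] j False Wn[of "Suc i"] Wn[of j] i
            by auto
        qed
        thus ?thesis unfolding Rmil_def lW using i False Wn[of "Suc i"] by (auto intro!: exI[of _ "Suc i"])
      qed
    next
      case False
      hence v: "p = Suc m" "e = t" "v = Suc m" using v by (auto split: if_splits)
      show ?thesis unfolding Rmil_def lW using v Wn[of m] by (auto intro!: exI[of _ m])
    qed
  qed
qed

lemma funpow_inj_cancel:
  assumes "inj_on g S" "g ` S \<subseteq> S" "a \<in> S" "b \<in> S" "(g^^i) a = (g^^i) b"
  shows "a = b"
  using assms(5)
proof (induction i)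
  case 0 thus ?case by simp
next
  case (Suc i)
  have "(g^^i) a \<in> S" "(g^^i) b \<in> S" using assms(2-4) by (induction i) auto
  thus ?case using Suc assms(1) by (auto dest: inj_onD)
qed

lemma funpow_in: "g ` S \<subseteq> S \<Longrightarrow> a \<in> S \<Longrightarrow> (g^^i) a \<in> S"
  by (induction i) auto

lemma funpow_return:
  assumes fin: "finite S" and inj: "inj_on g S" and im: "g ` S \<subseteq> S" and x: "x \<in> S"
  shows "\<exists>M>0. (g^^M) x = x"
proof -
  define h where "h = (\<lambda>i. (g^^i) x)"
  have "\<not> inj_on h {0..card S}"
  proof
    assume "inj_on h {0..card S}"
    moreover have "h ` {0..card S} \<subseteq> S" using funpow_in[OF im x] by (auto simp: h_def)
    ultimately have "card {0..card S} \<le> card S" using fin by (metis card_inj_on_le)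
    thus False by simp
  qed
  then obtain i j where ij: "i \<in> {0..card S}" "j \<in> {0..card S}" "i \<noteq> j" "h i = h j"
    unfolding inj_on_def by blast
  obtain a b where ab: "a < b" "(g^^a) x = (g^^b) x"
    using ij by (cases "i < j") (auto simp: h_def intro: that[of i j] that[of j i])
  have "(g^^b) x = (g^^(a + (b-a))) x" using ab by simp
  also have "\<dots> = (g^^a) ((g^^(b-a)) x)" by (simp add: funpow_add)
  finally have "(g^^a) ((g^^(b-a)) x) = (g^^a) x" using ab by simp
  hence "(g^^(b-a)) x = x" using funpow_inj_cancel[OF inj im _ x] funpow_in[OF im x] by blast
  thus ?thesis using ab by (intro exI[of _ "b - a"]) auto
qed

definition orb :: "(nat \<Rightarrow> nat) \<Rightarrow> nat \<Rightarrow> nat set" where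
  "orb f k = {(f^^i) k | i. True}"

lemma cycle_of_orb: "cycle_of w k = orb (bperm w) k"
  by (simp add: cycle_of_def orb_def)

lemma orb_self: "k \<in> orb f k"
  unfolding orb_def by (auto intro: exI[of _ 0])

lemma orb_closed: "x \<in> orb f k \<Longrightarrow> f x \<in> orb f k"
proof -
  assume "x \<in> orb f k"
  then obtain i where x: "x = (f^^i) k" unfolding orb_def by blast
  show ?thesis unfolding orb_def mem_Collect_eq
    by (rule exI[of _ "Suc i"]) (simp add: x)
qed

lemma orb_sub: "f ` S \<subseteq> S \<Longrightarrow> k \<in> S \<Longrightarrow> orb f k \<subseteq> S"
proof -
  assume a: "f ` S \<subseteq> S" "k \<in> S"
  show ?thesis
  proof
    fix x assume "x \<in> orb f k"
    then obtain i where "x = (f^^i) k" unfolding orb_def by blast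
    thus "x \<in> S" using funpow_in[OF a] by simp
  qed
qed

lemma orb_mono: "y \<in> orb f k \<Longrightarrow> orb f y \<subseteq> orb f k"
proof
  fix x assume "y \<in> orb f k" "x \<in> orb f y"
  then obtain i j where "y = (f^^i) k" "x = (f^^j) y" unfolding orb_def by blast
  hence "x = (f^^(j+i)) k" by (simp add: funpow_add)
  thus "x \<in> orb f k" unfolding orb_def by blast
qed

lemma orb_eq_on:
  assumes "\<forall>x\<in>S. g x = f x" "f ` S \<subseteq> S" "k \<in> S"
  shows "orb g k = orb f k"
proof -
  have "\<forall>i. (g^^i) k = (f^^i) k"
  proof
    fix i show "(g^^i) k = (f^^i) k"
      by (induction i) (use assms funpow_in[OF assms(2) assms(3)] in auto)
  qed
  thus ?thesis unfolding orb_def by simp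
qed

lemma orb_induct:
  assumes "x \<in> orb f k" "P k" "\<And>y. y \<in> orb f k \<Longrightarrow> P y \<Longrightarrow> P (f y)"
  shows "P x"
proof -
  obtain i where x: "x = (f^^i) k" using assms(1) unfolding orb_def by blast
  have "P ((f^^i) k) \<and> (f^^i) k \<in> orb f k"
  proof (induction i)
    case 0 thus ?case using assms(2) orb_self by simp
  next
    case (Suc i)
    have e: "(f^^Suc i) k = f ((f^^i) k)" by simp
    show ?case unfolding e using Suc assms(3) orb_closed by blast
  qed
  thus ?thesis using x by simp
qed

lemma orbit_insert:
  assumes fS: "f ` S \<subseteq> S" and k: "k \<in> S" and pS: "p \<in> S" and N: "N \<notin> S"
    and gf: "\<And>x. x \<in> S \<Longrightarrow> x \<noteq> p \<Longrightarrow> g x = f x" and gp: "g p = N" and gN: "g N = f p"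
  shows "orb g k = orb f k \<union> (if p \<in> orb f k then {N} else {})"
proof
  have OS: "orb f k \<subseteq> S" by (rule orb_sub[OF fS k])
  show "orb g k \<subseteq> orb f k \<union> (if p \<in> orb f k then {N} else {})"
  proof
    fix x assume "x \<in> orb g k"
    thus "x \<in> orb f k \<union> (if p \<in> orb f k then {N} else {})"
    proof (rule orb_induct)
      show "k \<in> orb f k \<union> (if p \<in> orb f k then {N} else {})" using orb_self by simp
      fix y assume y: "y \<in> orb f k \<union> (if p \<in> orb f k then {N} else {})"
      show "g y \<in> orb f k \<union> (if p \<in> orb f k then {N} else {})"
      proof (cases "y \<in> orb f k")
        case True
        show ?thesis
        proof (cases "y = p")
          case True thus ?thesis using gp \<open>y \<in> orb f k\<close> by simp
        next
          case False thus ?thesis using gf[of y] OS True orb_closed by auto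
        qed
      next
        case False
        hence "y = N" "p \<in> orb f k" using y by (auto split: if_splits)
        thus ?thesis using gN orb_closed by auto
      qed
    qed
  qed
next
  have OS: "orb f k \<subseteq> S" by (rule orb_sub[OF fS k])
  have sub: "orb f k \<subseteq> orb g k"
  proof
    fix x assume "x \<in> orb f k"
    thus "x \<in> orb g k"
    proof (rule orb_induct)
      show "k \<in> orb g k" by (rule orb_self)
      fix y assume y: "y \<in> orb f k" "y \<in> orb g k"
      show "f y \<in> orb g k"
      proof (cases "y = p")
        case True
        have "g y \<in> orb g k" using y orb_closed by blast
        hence "g (g y) \<in> orb g k" by (rule orb_closed)
        thus ?thesis using True gp gN by simp
      next
        case False thus ?thesis using gf[of y] OS y orb_closed by force
      qed
    qed
  qed
  moreover have "p \<in> orb f k \<Longrightarrow> N \<in> orb g k"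
    using sub orb_closed[of p g k] gp by auto
  ultimately show "orb f k \<union> (if p \<in> orb f k then {N} else {}) \<subseteq> orb g k" by auto
qed

lemma bperm_perm:
  assumes U: "U \<in> cperms r n"
  shows "inj_on (bperm U) {1..n}" "bperm U ` {1..n} \<subseteq> {1..n}"
proof -
  show "inj_on (bperm U) {1..n}"
  proof (rule inj_onI)
    fix x y assume xy: "x \<in> {1..n}" "y \<in> {1..n}" "bperm U x = bperm U y"
    hence "x - 1 < n" "y - 1 < n" by auto
    hence "x - 1 = y - 1" using cp_inj[OF U, of "x - 1" "y - 1"] xy(3) by (simp add: bperm_def)
    thus "x = y" using xy by auto
  qed
  show "bperm U ` {1..n} \<subseteq> {1..n}"
  proof
    fix y assume "y \<in> bperm U ` {1..n}"
    then obtain x where x: "x \<in> {1..n}" "y = bperm U x" by blast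
    hence "x - 1 < n" by auto
    thus "y \<in> {1..n}" using cp_val[OF U, of "x - 1"] x by (simp add: bperm_def)
  qed
qed

lemma mod_helper: "0 < r \<Longrightarrow> ((z + e) mod r + (cneg r e + A)) mod r = (z + A) mod r"
  using cneg_fix2[of r z e A] by (simp add: mod_add_right_eq)

lemma Cyc_insB:
  assumes u: "u \<in> cperms r m" and p: "1 \<le> p" "p \<le> Suc m" and e: "e < r" and r: "0 < r"
  shows "Cyc r c (insB r u p e) = Cyc r c u \<union> (if p = Suc m \<and> cneg r e = c then {Suc m} else {})"
proof -
  define U where "U = insB r u p e"
  have lu: "length u = m" using u by (rule cp_len)
  have UP: "U \<in> cperms r (Suc m)" unfolding U_def by (rule insB_in[OF u p e r])
  have lU: "length U = Suc m" using UP by (rule cp_len)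
  define f where "f = bperm u"
  define g where "g = bperm U"
  define S where "S = {1..m}"
  define sm where "sm X C = (\<Sum>i\<in>C. snd (X ! (i - 1)))" for X :: cword and C
  have fS: "f ` S \<subseteq> S" using bperm_perm(2)[OF u] by (simp add: f_def S_def)
  have Un: "\<And>i. i < Suc m \<Longrightarrow> U ! i = (if i = p - 1 then (Suc m, cneg r e)
     else if i = m then (fst (u!(p-1)), (snd (u!(p-1)) + e) mod r) else u ! i)"
    using p lu by (simp add: U_def insB_nth)
  have gf: "\<And>x. x \<in> S \<Longrightarrow> x \<noteq> p \<Longrightarrow> g x = f x"
  proof -
    fix x assume x: "x \<in> S" "x \<noteq> p"
    hence "x - 1 < Suc m" "x - 1 \<noteq> p - 1" "x - 1 \<noteq> m" using p by (auto simp: S_def)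
    thus "g x = f x" using Un[of "x - 1"] by (simp add: g_def f_def bperm_def)
  qed
  have cf: "\<And>x. x \<in> S \<Longrightarrow> x \<noteq> p \<Longrightarrow> snd (U ! (x - 1)) = snd (u ! (x - 1))"
  proof -
    fix x assume x: "x \<in> S" "x \<noteq> p"
    hence "x - 1 < Suc m" "x - 1 \<noteq> p - 1" "x - 1 \<noteq> m" using p by (auto simp: S_def)
    thus "snd (U ! (x - 1)) = snd (u ! (x - 1))" using Un[of "x - 1"] by simp
  qed
  have gp: "g p = Suc m" using Un[of "p - 1"] p by (simp add: g_def bperm_def)
  have NS: "Suc m \<notin> S" by (simp add: S_def)
  have key: "\<And>k. k \<in> S \<Longrightarrow> Min (orb g k) = Min (orb f k) \<and> sm U (orb g k) mod r = sm u (orb f k) mod r"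
  proof -
    fix k assume k: "k \<in> S"
    have OS: "orb f k \<subseteq> S" by (rule orb_sub[OF fS k])
    have fin: "finite (orb f k)" using OS finite_subset by (auto simp: S_def)
    have ne: "orb f k \<noteq> {}" using orb_self by blast
    show "Min (orb g k) = Min (orb f k) \<and> sm U (orb g k) mod r = sm u (orb f k) mod r"
    proof (cases "p = Suc m")
      case True
      have "\<forall>x\<in>S. g x = f x" using gf True NS by auto
      hence eq: "orb g k = orb f k" by (rule orb_eq_on[OF _ fS k])
      have "sm U (orb f k) = sm u (orb f k)" unfolding sm_def
        by (rule sum.cong) (use cf OS True NS in auto)
      thus ?thesis using eq by simp
    next
      case False
      hence pS: "p \<in> S" using p by (simp add: S_def)
      have mp: "m \<noteq> p - 1" using False p by simp
      have gN: "g (Suc m) = f p" using Un[of m] mp by (simp add: g_def f_def bperm_def)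
      have oi: "orb g k = orb f k \<union> (if p \<in> orb f k then {Suc m} else {})"
        by (rule orbit_insert[OF fS k pS NS gf gp gN])
      show ?thesis
      proof (cases "p \<in> orb f k")
        case False
        hence eq: "orb g k = orb f k" using oi by simp
        have "sm U (orb f k) = sm u (orb f k)" unfolding sm_def
          by (rule sum.cong) (use cf OS False in auto)
        thus ?thesis using eq by simp
      next
        case True
        hence eq: "orb g k = insert (Suc m) (orb f k)" using oi by simp
        have NO: "Suc m \<notin> orb f k" using OS NS by auto
        have "Min (orb f k) \<in> orb f k" using fin ne by simp
        hence "Min (orb f k) \<le> m" using OS by (auto simp: S_def)
        hence mn: "Min (orb g k) = Min (orb f k)" unfolding eq using fin ne by simp
        define A where "A = sm u (orb f k - {p})"
        have A2: "sm U (orb f k - {p}) = A" unfolding A_def sm_def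
          by (rule sum.cong) (use cf OS in auto)
        have s0: "sm U (orb g k) = snd (U ! m) + sm U (orb f k)"
          unfolding eq sm_def using fin NO by simp
        have s01: "sm U (orb f k) = snd (U ! (p - 1)) + sm U (orb f k - {p})"
          unfolding sm_def using fin True by (simp add: sum.remove[of _ p])
        have "snd (U ! (p - 1)) = cneg r e" using Un[of "p - 1"] p by simp
        hence s1: "sm U (orb g k) = snd (U ! m) + (cneg r e + A)" using s0 s01 A2 by simp
        have s2: "sm u (orb f k) = snd (u ! (p - 1)) + A"
          unfolding A_def sm_def using fin True by (simp add: sum.remove[of _ p])
        have "snd (U ! m) = (snd (u ! (p-1)) + e) mod r" using Un[of m] mp by simp
        hence "sm U (orb g k) mod r = sm u (orb f k) mod r" using s1 s2 mod_helper[OF r] by simp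
        thus ?thesis using mn by simp
      qed
    qed
  qed
  have kN: "Suc m \<in> {1..Suc m}" by simp
  have gperm: "inj_on g {1..Suc m}" "g ` {1..Suc m} \<subseteq> {1..Suc m}"
    using bperm_perm[OF UP] by (auto simp: g_def)
  have Ncase1: "p = Suc m \<Longrightarrow> orb g (Suc m) = {Suc m} \<and> sm U {Suc m} = cneg r e"
  proof -
    assume pN: "p = Suc m"
    have gNN: "g (Suc m) = Suc m" using Un[of m] pN by (simp add: g_def bperm_def)
    have "orb g (Suc m) \<subseteq> {Suc m}"
    proof
      fix x assume "x \<in> orb g (Suc m)"
      thus "x \<in> {Suc m}" by (rule orb_induct) (use gNN in auto)
    qed
    moreover have "sm U {Suc m} = cneg r e" using Un[of m] pN by (simp add: sm_def)
    ultimately show ?thesis using orb_self by blast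
  qed
  have Ncase2: "p \<noteq> Suc m \<Longrightarrow> orb g (Suc m) = orb g p"
  proof -
    assume pN: "p \<noteq> Suc m"
    have pS': "p \<in> {1..Suc m}" using p by simp
    obtain M where M: "M > 0" "(g^^M) p = p" using funpow_return[OF _ gperm pS'] by auto
    have "(g^^M) p = (g^^(M - 1 + 1)) p" using M by simp
    also have "\<dots> = (g^^(M-1)) (g p)" by (simp add: funpow_swap1)
    finally have "p = (g^^(M-1)) (Suc m)" using M gp by simp
    hence "p \<in> orb g (Suc m)" unfolding orb_def by blast
    moreover have "Suc m \<in> orb g p" using gp orb_closed[OF orb_self, of g p] by simp
    ultimately show ?thesis using orb_mono by blast
  qed
  have CU: "Cyc r c U = {Min (orb g k) | k. 1 \<le> k \<and> k \<le> Suc m \<and> sm U (orb g k) mod r = c}"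
    unfolding Cyc_def lU cycle_of_orb g_def sm_def ..
  have Cu: "Cyc r c u = {Min (orb f k) | k. 1 \<le> k \<and> k \<le> m \<and> sm u (orb f k) mod r = c}"
    unfolding Cyc_def lu cycle_of_orb f_def sm_def ..
  have "Cyc r c U = Cyc r c u \<union> (if p = Suc m \<and> cneg r e = c then {Suc m} else {})"
  proof (intro set_eqI iffI)
    fix x assume "x \<in> Cyc r c U"
    then obtain k where k: "x = Min (orb g k)" "1 \<le> k" "k \<le> Suc m" "sm U (orb g k) mod r = c"
      unfolding CU by blast
    show "x \<in> Cyc r c u \<union> (if p = Suc m \<and> cneg r e = c then {Suc m} else {})"
    proof (cases "k \<le> m")
      case True
      hence "k \<in> S" using k by (simp add: S_def)
      thus ?thesis using key[of k] k True unfolding Cu by auto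
    next
      case False
      hence kk: "k = Suc m" using k by simp
      show ?thesis
      proof (cases "p = Suc m")
        case True
        thus ?thesis using Ncase1 k kk cneg_lt[OF r] by auto
      next
        case pF: False
        hence "p \<in> S" using p by (simp add: S_def)
        thus ?thesis using key[of p] k kk Ncase2[OF pF] unfolding Cu by (auto simp: S_def)
      qed
    qed
  next
    fix x assume x: "x \<in> Cyc r c u \<union> (if p = Suc m \<and> cneg r e = c then {Suc m} else {})"
    show "x \<in> Cyc r c U"
    proof (cases "x \<in> Cyc r c u")
      case True
      then obtain k where k: "x = Min (orb f k)" "1 \<le> k" "k \<le> m" "sm u (orb f k) mod r = c"
        unfolding Cu by blast
      hence "k \<in> S" by (simp add: S_def)
      thus ?thesis using key[of k] k unfolding CU by (auto intro!: exI[of _ k])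
    next
      case False
      hence xx: "p = Suc m" "cneg r e = c" "x = Suc m" using x by (auto split: if_splits)
      thus ?thesis using Ncase1 cneg_lt[OF r] unfolding CU by (auto intro!: exI[of _ "Suc m"])
    qed
  qed
  thus ?thesis by (simp add: U_def)
qed

lemma Lmil_insA:
  assumes w: "w \<in> cperms r m" and p: "1 \<le> p" "p \<le> Suc m" and e: "e < r"
  shows "Lmil t (insA w p e) = Lmil t w \<union> (if p = 1 \<and> e = t then {Suc m} else {})"
proof -
  have lw: "length w = m" using w by (rule cp_len)
  define W where "W = insA w p e"
  have lW: "length W = Suc m" by (simp add: W_def insA_len lw)
  have Wn: "\<And>i. i < Suc m \<Longrightarrow> W ! i = (if i < p - 1 then w ! i else if i = p - 1 then (Suc m, e) else w ! (i - 1))"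
    using p lw by (simp add: W_def insA_nth)
  show ?thesis unfolding W_def[symmetric]
  proof (intro set_eqI iffI)
    fix v assume "v \<in> Lmil t W"
    then obtain i where i: "v = fst (W!i)" "i < Suc m" "snd (W!i) = t"
      and H: "\<forall>j<i. fst (W!i) < fst (W!j)" unfolding Lmil_def lW by blast
    consider (lt) "i < p - 1" | (eq) "i = p - 1" | (gt) "p - 1 < i" by linarith
    thus "v \<in> Lmil t w \<union> (if p = 1 \<and> e = t then {Suc m} else {})"
    proof cases
      case lt
      have "\<forall>j<i. fst (w!i) < fst (w!j)"
      proof (intro allI impI)
        fix j assume j: "j < i"
        thus "fst (w!i) < fst (w!j)" using H[rule_format, of j] lt Wn[of i] Wn[of j] i by simp
      qed
      hence "v \<in> Lmil t w" unfolding Lmil_def lw using i lt Wn[of i] p by (auto intro!: exI[of _ i])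
      thus ?thesis by simp
    next
      case eq
      have "p = 1"
      proof (rule ccontr)
        assume "p \<noteq> 1"
        hence "0 < p - 1" using p by simp
        hence "fst (W!i) < fst (W!0)" using H eq by simp
        moreover have "fst (W!0) = fst (w!0)" using Wn[of 0] \<open>0 < p - 1\<close> by simp
        moreover have "fst (w!0) \<le> m" using cp_val[OF w, of 0] \<open>0 < p - 1\<close> p by simp
        ultimately show False using Wn[of i] eq p by simp
      qed
      thus ?thesis using i eq Wn[of i] by simp
    next
      case gt
      have i1: "i - 1 < m" "p - 1 \<le> i - 1" using gt i by auto
      have "\<forall>j<i - 1. fst (w!(i-1)) < fst (w!j)"
      proof (intro allI impI)
        fix j assume j: "j < i - 1"
        show "fst (w!(i-1)) < fst (w!j)"
        proof (cases "j < p - 1")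
          case True thus ?thesis using H[rule_format, of j] gt Wn[of i] Wn[of j] j i by simp
        next
          case False thus ?thesis using H[rule_format, of "Suc j"] gt Wn[of i] Wn[of "Suc j"] j i by simp
        qed
      qed
      hence "v \<in> Lmil t w" unfolding Lmil_def lw using i gt Wn[of i] i1 by (auto intro!: exI[of _ "i - 1"])
      thus ?thesis by simp
    qed
  next
    fix v assume v: "v \<in> Lmil t w \<union> (if p = 1 \<and> e = t then {Suc m} else {})"
    show "v \<in> Lmil t W"
    proof (cases "v \<in> Lmil t w")
      case True
      then obtain i where i: "v = fst (w!i)" "i < m" "snd (w!i) = t"
        and H: "\<forall>j<i. fst (w!i) < fst (w!j)" unfolding Lmil_def lw by blast
      have vm: "v \<le> m" using cp_val[OF w i(2)] i by simp
      show ?thesis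
      proof (cases "i < p - 1")
        case True
        have "\<forall>j<i. fst (W!i) < fst (W!j)"
        proof (intro allI impI)
          fix j assume j: "j < i"
          thus "fst (W!i) < fst (W!j)" using H[rule_format, of j] True Wn[of i] Wn[of j] i by simp
        qed
        thus ?thesis unfolding Lmil_def lW using i True Wn[of i] by (auto intro!: exI[of _ i])
      next
        case False
        have "\<forall>j<Suc i. fst (W!(Suc i)) < fst (W!j)"
        proof (intro allI impI)
          fix j assume j: "j < Suc i"
          consider (a) "j < p - 1" | (b) "j = p - 1" | (c) "p - 1 < j" by linarith
          thus "fst (W!(Suc i)) < fst (W!j)"
          proof cases
            case a thus ?thesis using H[rule_format, of j] False Wn[of "Suc i"] Wn[of j] j i by simp
          next
            case b thus ?thesis using False Wn[of "Suc i"] Wn[of j] j i vm by simp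
          next
            case c
            have "j - 1 < i" using c j by auto
            thus ?thesis using H[rule_format, of "j - 1"] c False Wn[of "Suc i"] Wn[of j] j i by simp
          qed
        qed
        thus ?thesis unfolding Lmil_def lW using i False Wn[of "Suc i"] by (auto intro!: exI[of _ "Suc i"])
      qed
    next
      case False
      hence v: "p = 1" "e = t" "v = Suc m" using v by (auto split: if_splits)
      show ?thesis unfolding Lmil_def lW using v Wn[of 0] by (auto intro!: exI[of _ 0])
    qed
  qed
qed

inductive rch :: "(nat \<times> nat \<Rightarrow> nat \<times> nat) \<Rightarrow> nat \<Rightarrow> nat \<times> nat \<Rightarrow> nat \<times> nat \<Rightarrow> bool"
  for G v s where
  rstep: "rch G v s (G s)"
| rtrans: "rch G v s x \<Longrightarrow> v < fst x \<Longrightarrow> rch G v s (G x)"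

lemma mod_cancel:
  assumes a: "a < (r::nat)" and b: "b < r" and eq: "(z + a) mod r = (z + b) mod r"
  shows "a = b"
proof -
  have *: "\<And>a b. a < r \<Longrightarrow> b < r \<Longrightarrow> a \<le> b \<Longrightarrow> (z + a) mod r = (z + b) mod r \<Longrightarrow> a = b"
  proof -
    fix a b assume ab: "a < r" "b < r" "a \<le> b" "(z + a) mod r = (z + b) mod r"
    hence "r dvd (z + b) - (z + a)" using mod_eq_dvd_iff_nat[of "z + a" "z + b" r] by simp
    hence "r dvd b - a" by simp
    moreover have "b - a < r" using ab by simp
    ultimately have "b - a = 0" using nat_dvd_not_less by blast
    thus "a = b" using ab by simp
  qed
  show ?thesis using *[OF a b] *[OF b a] eq by (cases "a \<le> b") auto
qed

lemma rch_iter: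
  "1 \<le> m \<Longrightarrow> (\<forall>m'. 1 \<le> m' \<and> m' < m \<longrightarrow> v < fst ((G^^m') s)) \<Longrightarrow> rch G v s ((G^^m) s)"
proof (induction m)
  case 0 thus ?case by simp
next
  case (Suc k)
  show ?case
  proof (cases "k = 0")
    case True thus ?thesis using rstep by simp
  next
    case False
    hence "rch G v s ((G^^k) s)" using Suc by simp
    moreover have "v < fst ((G^^k) s)" using Suc.prems False by simp
    ultimately show ?thesis using rtrans by simp
  qed
qed

lemma iter_rch:
  "rch G v s y \<Longrightarrow> \<exists>m. 1 \<le> m \<and> (G^^m) s = y \<and> (\<forall>m'. 1 \<le> m' \<and> m' < m \<longrightarrow> v < fst ((G^^m') s))"
proof (induction rule: rch.induct)
  case rstep
  show ?case by (rule exI[of _ 1]) simp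
next
  case (rtrans x)
  then obtain m where m: "1 \<le> m" "(G^^m) s = x" "\<forall>m'. 1 \<le> m' \<and> m' < m \<longrightarrow> v < fst ((G^^m') s)"
    by blast
  have "\<forall>m'. 1 \<le> m' \<and> m' < Suc m \<longrightarrow> v < fst ((G^^m') s)"
    using m rtrans.hyps(2) less_Suc_eq by auto
  thus ?case using m by (intro exI[of _ "Suc m"]) simp
qed

lemma rch_range:
  assumes "rch G v s y" "P s" "\<And>x. P x \<Longrightarrow> P (G x)"
  shows "P (G s) \<and> P y"
  using assms by (induction rule: rch.induct) auto

definition rng :: "nat \<Rightarrow> nat \<Rightarrow> (nat \<times> nat) set" where
  "rng r n = {1..n} \<times> {0..<r}"

lemma cact_rng:
  assumes u: "u \<in> cperms r n" and r: "0 < r" and x: "x \<in> rng r n"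
  shows "cact r u x \<in> rng r n"
proof -
  have "fst x - 1 < n" using x by (auto simp: rng_def)
  thus ?thesis using cp_val[OF u, of "fst x - 1"] r by (simp add: cact_def rng_def)
qed

lemma cact_inj:
  assumes u: "u \<in> cperms r n" and r: "0 < r"
  shows "inj_on (cact r u) (rng r n)"
proof (rule inj_onI)
  fix x y assume x: "x \<in> rng r n" and y: "y \<in> rng r n" and eq: "cact r u x = cact r u y"
  have xn: "fst x - 1 < n" "fst y - 1 < n" using x y by (auto simp: rng_def)
  have "fst (u ! (fst x - 1)) = fst (u ! (fst y - 1))" using eq by (simp add: cact_def)
  hence "fst x - 1 = fst y - 1" using cp_inj[OF u xn] by simp
  hence fx: "fst x = fst y" using x y by (auto simp: rng_def)
  hence "(snd (u ! (fst x - 1)) + snd x) mod r = (snd (u ! (fst x - 1)) + snd y) mod r"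
    using eq by (simp add: cact_def)
  hence "snd x = snd y" using mod_cancel x y by (auto simp: rng_def)
  thus "x = y" using fx by (simp add: prod_eq_iff)
qed

lemma Lmic_char:
  assumes u: "u \<in> cperms r n" and r: "0 < r" and n: "1 \<le> n"
  shows "Lmic r c u = {v. rch (cact r u) v (1, 0) (v, c)}"
proof -
  define G where "G = cact r u"
  define s where "s = ((1::nat), (0::nat))"
  have sR: "s \<in> rng r n" using n r by (simp add: s_def rng_def)
  have GR: "G ` rng r n \<subseteq> rng r n" using cact_rng[OF u r] by (auto simp: G_def)
  have fin: "finite (rng r n)" by (simp add: rng_def)
  obtain M where M: "M > 0" "(G^^M) s = s"
    using funpow_return[OF fin cact_inj[OF u r] _ sR] GR by (auto simp: G_def)
  define m0 where "m0 = (LEAST m. 1 \<le> m \<and> (G^^m) s = s)"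
  have m0: "1 \<le> m0" "(G^^m0) s = s"
    using LeastI[of "\<lambda>m. 1 \<le> m \<and> (G^^m) s = s" M] M by (auto simp: m0_def)
  have val: "\<And>k. fst ((G^^k) s) \<ge> 1"
  proof -
    fix k
    have "(G^^k) s \<in> rng r n" by (rule funpow_in[OF GR sR])
    thus "fst ((G^^k) s) \<ge> 1" by (auto simp: rng_def mem_Times_iff)
  qed
  have L: "Lmic r c u = {fst ((G^^m) s) | m. 1 \<le> m \<and> m \<le> m0 \<and> snd ((G^^m) s) = c \<and>
            (\<forall>m'. 1 \<le> m' \<and> m' < m \<longrightarrow> fst ((G^^m) s) < fst ((G^^m') s))}"
    unfolding Lmic_def G_def s_def m0_def Let_def ..
  show ?thesis unfolding L G_def[symmetric] s_def[symmetric]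
  proof (intro set_eqI iffI)
    fix v assume "v \<in> {fst ((G^^m) s) | m. 1 \<le> m \<and> m \<le> m0 \<and> snd ((G^^m) s) = c \<and>
            (\<forall>m'. 1 \<le> m' \<and> m' < m \<longrightarrow> fst ((G^^m) s) < fst ((G^^m') s))}"
    then obtain m where mm: "v = fst ((G^^m) s)" "1 \<le> m" "snd ((G^^m) s) = c"
      "\<forall>m'. 1 \<le> m' \<and> m' < m \<longrightarrow> v < fst ((G^^m') s)" by blast
    have "rch G v s ((G^^m) s)" by (rule rch_iter) (use mm in auto)
    moreover have "(G^^m) s = (v, c)" using mm by (simp add: prod_eq_iff)
    ultimately show "v \<in> {v. rch G v s (v, c)}" by simp
  next
    fix v assume "v \<in> {v. rch G v s (v, c)}"
    then obtain m where mm: "1 \<le> m" "(G^^m) s = (v, c)"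
      "\<forall>m'. 1 \<le> m' \<and> m' < m \<longrightarrow> v < fst ((G^^m') s)" using iter_rch by fastforce
    have "m \<le> m0"
    proof (rule ccontr)
      assume "\<not> m \<le> m0"
      hence "v < fst ((G^^m0) s)" using mm m0 by auto
      hence "v < 1" using m0 by (simp add: s_def)
      moreover have "v \<ge> 1" using val[of m] mm by simp
      ultimately show False by simp
    qed
    thus "v \<in> {fst ((G^^m) s) | m. 1 \<le> m \<and> m \<le> m0 \<and> snd ((G^^m) s) = c \<and>
            (\<forall>m'. 1 \<le> m' \<and> m' < m \<longrightarrow> fst ((G^^m) s) < fst ((G^^m') s))}"
      using mm by (auto intro!: exI[of _ m])
  qed
qed

lemma rch_cong:
  assumes eq: "\<And>x. fst x \<in> T \<Longrightarrow> G1 x = G2 x" and pres: "\<And>x. fst x \<in> T \<Longrightarrow> fst (G2 x) \<in> T"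
    and s: "fst s \<in> T" and r: "rch G1 v s y"
  shows "rch G2 v s y"
proof -
  have "rch G2 v s y \<and> fst y \<in> T"
    using r
  proof (induction rule: rch.induct)
    case rstep thus ?case using eq[OF s] pres[OF s] rch.rstep by simp
  next
    case (rtrans x) thus ?case using eq[of x] pres[of x] rch.rtrans[of G2 v s x] by simp
  qed
  thus ?thesis by simp
qed

lemma rch_T:
  assumes pres: "\<And>x. fst x \<in> T \<Longrightarrow> fst (G x) \<in> T" and s: "fst s \<in> T" and r: "rch G v s y"
  shows "fst y \<in> T"
  using r by (induction rule: rch.induct) (use pres s in auto)

lemma rch_ins1:
  assumes pres: "\<And>x. fst x \<in> T \<Longrightarrow> fst (G' x) \<in> T" and s: "fst s \<in> T" and N: "N \<notin> T"
    and pT: "p \<in> T" and gf: "\<And>x. fst x \<in> T \<Longrightarrow> fst x \<noteq> p \<Longrightarrow> GU x = G' x"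
    and gp: "\<And>x. fst x = p \<Longrightarrow> fst (GU x) = N \<and> GU (GU x) = G' x"
    and r: "rch GU v s y"
  shows "(fst y \<noteq> N \<longrightarrow> rch G' v s y) \<and>
         (fst y = N \<longrightarrow> (\<exists>x. fst x = p \<and> y = GU x \<and> (x = s \<or> (rch G' v s x \<and> v < fst x))))"
  using r
proof (induction rule: rch.induct)
  case rstep
  show ?case
  proof (cases "fst s = p")
    case True
    have "fst (GU s) = N" using gp[OF True] by simp
    moreover have "\<exists>x. fst x = p \<and> GU s = GU x \<and> (x = s \<or> (rch G' v s x \<and> v < fst x))"
      by (rule exI[of _ s]) (simp add: True)
    ultimately show ?thesis by simp
  next
    case False
    hence "GU s = G' s" using gf s by simp
    moreover have "fst (G' s) \<in> T" using pres s by simp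
    ultimately show ?thesis using N rch.rstep[of G' v s] by auto
  qed
next
  case (rtrans x)
  show ?case
  proof (cases "fst x = N")
    case True
    then obtain x0 where x0: "fst x0 = p" "x = GU x0" "x0 = s \<or> (rch G' v s x0 \<and> v < fst x0)"
      using rtrans.IH by blast
    have y: "GU x = G' x0" using gp[OF x0(1)] x0(2) by simp
    have "fst (G' x0) \<in> T" using pres pT x0(1) by simp
    moreover have "rch G' v s (G' x0)" using x0(3) rch.rstep[of G' v s] rch.rtrans[of G' v s x0] by auto
    ultimately show ?thesis using y N by auto
  next
    case False
    hence rx: "rch G' v s x" using rtrans.IH by simp
    have xT: "fst x \<in> T" by (rule rch_T[OF pres s rx])
    show ?thesis
    proof (cases "fst x = p")
      case True
      have "fst (GU x) = N" using gp[OF True] by simp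
      moreover have "\<exists>x0. fst x0 = p \<and> GU x = GU x0 \<and> (x0 = s \<or> (rch G' v s x0 \<and> v < fst x0))"
        by (rule exI[of _ x]) (use True rx rtrans in simp)
      ultimately show ?thesis by simp
    next
      case False
      hence "GU x = G' x" using gf xT by simp
      moreover have "fst (G' x) \<in> T" using pres xT by simp
      ultimately show ?thesis using N rch.rtrans[OF rx rtrans.hyps(2)] by auto
    qed
  qed
qed

lemma rch_ins2:
  assumes pres: "\<And>x. fst x \<in> T \<Longrightarrow> fst (G' x) \<in> T" and s: "fst s \<in> T"
    and gf: "\<And>x. fst x \<in> T \<Longrightarrow> fst x \<noteq> p \<Longrightarrow> GU x = G' x"
    and gp: "\<And>x. fst x = p \<Longrightarrow> fst (GU x) = N \<and> GU (GU x) = G' x"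
    and r: "rch G' v s y" and vN: "v < N"
  shows "rch GU v s y"
  using r
proof (induction rule: rch.induct)
  case rstep
  show ?case
  proof (cases "fst s = p")
    case True
    have "rch GU v s (GU s)" by (rule rch.rstep)
    moreover have "v < fst (GU s)" using gp[OF True] vN by simp
    ultimately have "rch GU v s (GU (GU s))" by (rule rch.rtrans)
    thus ?thesis using gp[OF True] by simp
  next
    case False thus ?thesis using gf s rch.rstep[of GU v s] by simp
  qed
next
  case (rtrans x)
  have xT: "fst x \<in> T" by (rule rch_T[OF pres s rtrans.hyps(1)])
  show ?case
  proof (cases "fst x = p")
    case True
    have "rch GU v s (GU x)" using rch.rtrans[OF rtrans.IH rtrans.hyps(2)] .
    moreover have "v < fst (GU x)" using gp[OF True] vN by simp
    ultimately have "rch GU v s (GU (GU x))" by (rule rch.rtrans)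
    thus ?thesis using gp[OF True] by simp
  next
    case False thus ?thesis using gf xT rch.rtrans[OF rtrans.IH rtrans.hyps(2)] by simp
  qed
qed

lemma Lmic_insB:
  assumes u: "u \<in> cperms r m" and m1: "1 \<le> m" and p: "1 \<le> p" "p \<le> Suc m" and e: "e < r" and r: "0 < r"
  shows "Lmic r c (insB r u p e) = Lmic r c u \<union> (if p = 1 \<and> cneg r e = c then {Suc m} else {})"
proof -
  define U where "U = insB r u p e"
  have lu: "length u = m" using u by (rule cp_len)
  have UP: "U \<in> cperms r (Suc m)" unfolding U_def by (rule insB_in[OF u p e r])
  define GU where "GU = cact r U"
  define G' where "G' = cact r u"
  define T where "T = {1..m}"
  define s where "s = ((1::nat), (0::nat))"
  have Un: "\<And>i. i < Suc m \<Longrightarrow> U ! i = (if i = p - 1 then (Suc m, cneg r e)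
     else if i = m then (fst (u!(p-1)), (snd (u!(p-1)) + e) mod r) else u ! i)"
    using p lu by (simp add: U_def insB_nth)
  have pres: "\<And>x. fst x \<in> T \<Longrightarrow> fst (G' x) \<in> T"
  proof -
    fix x :: "nat \<times> nat" assume "fst x \<in> T"
    hence "fst x - 1 < m" by (auto simp: T_def)
    thus "fst (G' x) \<in> T" using cp_val[OF u, of "fst x - 1"] by (simp add: G'_def cact_def T_def)
  qed
  have sT: "fst s \<in> T" using m1 by (simp add: s_def T_def)
  have NT: "Suc m \<notin> T" by (simp add: T_def)
  have gf: "\<And>x. fst x \<in> T \<Longrightarrow> fst x \<noteq> p \<Longrightarrow> GU x = G' x"
  proof -
    fix x :: "nat \<times> nat" assume x: "fst x \<in> T" "fst x \<noteq> p"
    hence "fst x - 1 < Suc m" "fst x - 1 \<noteq> p - 1" "fst x - 1 \<noteq> m" using p by (auto simp: T_def)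
    thus "GU x = G' x" using Un[of "fst x - 1"] by (simp add: GU_def G'_def cact_def)
  qed
  have LU: "Lmic r c U = {v. rch GU v s (v, c)}" unfolding GU_def s_def by (rule Lmic_char[OF UP r]) simp
  have Lu: "Lmic r c u = {v. rch G' v s (v, c)}" unfolding G'_def s_def by (rule Lmic_char[OF u r m1])
  have "Lmic r c U = Lmic r c u \<union> (if p = 1 \<and> cneg r e = c then {Suc m} else {})"
  proof (cases "p = Suc m")
    case True
    have eqT: "\<And>x. fst x \<in> T \<Longrightarrow> GU x = G' x"
    proof -
      fix x :: "nat \<times> nat" assume x: "fst x \<in> T"
      hence "fst x \<noteq> p" using True NT by auto
      thus "GU x = G' x" using gf x by simp
    qed
    have presU: "\<And>x. fst x \<in> T \<Longrightarrow> fst (GU x) \<in> T" using eqT pres by simp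
    have "\<And>v y. rch GU v s y \<longleftrightarrow> rch G' v s y"
    proof
      fix v y assume a: "rch GU v s y" show "rch G' v s y" by (rule rch_cong[of T GU G' s v y, OF eqT pres sT a])
    next
      fix v y assume a: "rch G' v s y" show "rch GU v s y" by (rule rch_cong[of T G' GU s v y, OF eqT[symmetric] presU sT a])
    qed
    moreover have "p \<noteq> 1" using True m1 by simp
    ultimately show ?thesis unfolding LU Lu by simp
  next
    case False
    have pT: "p \<in> T" using p False by (simp add: T_def)
    have mp: "m \<noteq> p - 1" "p - 1 < Suc m" using False p by auto
    have gp: "\<And>x. fst x = p \<Longrightarrow> fst (GU x) = Suc m \<and> GU (GU x) = G' x"
    proof -
      fix x :: "nat \<times> nat" assume x: "fst x = p"
      have g1: "GU x = (Suc m, (cneg r e + snd x) mod r)" using Un[of "p - 1"] x mp by (simp add: GU_def cact_def)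
      have "GU (GU x) = (fst (u!(p-1)), ((snd (u!(p-1)) + e) mod r + (cneg r e + snd x) mod r) mod r)"
        unfolding g1 using Un[of m] mp by (simp add: GU_def cact_def)
      also have "\<dots> = G' x" using cneg_fix2[OF r] x by (simp add: G'_def cact_def)
      finally show "fst (GU x) = Suc m \<and> GU (GU x) = G' x" using g1 by simp
    qed
    show ?thesis
    proof (intro set_eqI iffI)
      fix v assume "v \<in> Lmic r c U"
      hence rv: "rch GU v s (v, c)" using LU by simp
      note c1 = rch_ins1[OF pres sT NT pT gf gp rv]
      show "v \<in> Lmic r c u \<union> (if p = 1 \<and> cneg r e = c then {Suc m} else {})"
      proof (cases "v = Suc m")
        case True
        then obtain x where x: "fst x = p" "(v, c) = GU x" "x = s \<or> (rch G' v s x \<and> v < fst x)"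
          using c1 by auto
        have "x = s"
        proof (rule ccontr)
          assume "x \<noteq> s"
          hence "rch G' v s x" "v < fst x" using x by auto
          moreover have "fst x \<in> T" by (rule rch_T[OF pres sT \<open>rch G' v s x\<close>])
          ultimately show False using True by (simp add: T_def)
        qed
        hence "p = 1" using x by (simp add: s_def)
        moreover have "c = cneg r e" using x \<open>x = s\<close> gp[of s] Un[of "p - 1"] mp cneg_lt[OF r, of e]
          by (simp add: GU_def cact_def s_def)
        ultimately show ?thesis using True by simp
      next
        case False thus ?thesis using c1 Lu by simp
      qed
    next
      fix v assume v: "v \<in> Lmic r c u \<union> (if p = 1 \<and> cneg r e = c then {Suc m} else {})"
      show "v \<in> Lmic r c U"
      proof (cases "v \<in> Lmic r c u")
        case True
        hence rv: "rch G' v s (v, c)" using Lu by simp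
        have "v \<in> T" using rch_T[OF pres sT rv] by simp
        hence "v < Suc m" by (simp add: T_def)
        thus ?thesis using rch_ins2[OF pres sT gf gp rv] LU by simp
      next
        case False
        hence vv: "p = 1" "cneg r e = c" "v = Suc m" using v by (auto split: if_splits)
        have "GU s = (Suc m, cneg r e)" using Un[of 0] vv m1 cneg_lt[OF r, of e]
          by (simp add: GU_def cact_def s_def)
        hence "rch GU v s (v, c)" using rch.rstep[of GU v s] vv by simp
        thus ?thesis using LU by simp
      qed
    qed
  qed
  thus ?thesis by (simp add: U_def)
qed

lemma Lmic_base:
  assumes z: "z < r" and r: "0 < r"
  shows "Lmic r c [(1, z)] = (if z = c then {1} else {})"
proof -
  have u: "[(1::nat, z)] \<in> cperms r 1" using z by (simp add: cperms_def)
  define G where "G = cact r [(1, z)]"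
  define s where "s = ((1::nat), (0::nat))"
  have L: "Lmic r c [(1, z)] = {v. rch G v s (v, c)}"
    unfolding G_def s_def by (rule Lmic_char[OF u r]) simp
  have cl: "\<And>v y. rch G v s y \<Longrightarrow> fst y = 1 \<and> (v = 0 \<or> y = (1, z))"
  proof -
    fix v y assume "rch G v s y"
    thus "fst y = 1 \<and> (v = 0 \<or> y = (1, z))"
      by (induction rule: rch.induct) (use z in \<open>auto simp: G_def s_def cact_def\<close>)
  qed
  have "{v. rch G v s (v, c)} = (if z = c then {1} else {})"
  proof (intro set_eqI iffI)
    fix v assume "v \<in> {v. rch G v s (v, c)}"
    hence "rch G v s (v, c)" by simp
    from cl[OF this] show "v \<in> (if z = c then {1} else {})" by auto
  next
    fix v :: nat assume v: "v \<in> (if z = c then {1} else {})"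
    hence vv: "v = 1" "z = c" by (auto split: if_splits)
    have "G s = (1, z)" using z by (simp add: G_def s_def cact_def)
    thus "v \<in> {v. rch G v s (v, c)}" using rch.rstep[of G v s] vv by simp
  qed
  thus ?thesis using L by simp
qed

type_synonym cw = "(nat \<times> nat) list"

fun Gf :: "nat list \<Rightarrow> cw \<Rightarrow> nat" where
  "Gf pre [] = 0"
| "Gf pre (x # xs) = length (filter (\<lambda>y. fst y < fst x) xs)
     + (if 0 < snd x then 2 * length (filter (\<lambda>y. y < fst x) pre) + snd x else 0)
     + Gf (pre @ [fst x]) xs"

lemma Gf_pre_cong:
  "(\<forall>x\<in>set ws. length (filter (\<lambda>y. y < fst x) pre) = length (filter (\<lambda>y. y < fst x) pre'))
   \<Longrightarrow> Gf pre ws = Gf pre' ws"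
proof (induction ws arbitrary: pre pre')
  case Nil thus ?case by simp
next
  case (Cons x xs)
  have "Gf (pre @ [fst x]) xs = Gf (pre' @ [fst x]) xs"
    by (rule Cons.IH) (use Cons.prems in auto)
  thus ?case using Cons.prems by simp
qed

lemma Gf_swap:
  assumes ab: "fst a < fst b"
  shows "Gf pre (xs @ b # a # ys) + 2 * (if 0 < snd b then 1 else 0) = Gf pre (xs @ a # b # ys) + 1"
proof (induction xs arbitrary: pre)
  case Nil
  have c: "Gf (pre @ [fst b, fst a]) ys = Gf (pre @ [fst a, fst b]) ys"
    by (rule Gf_pre_cong) auto
  show ?case using ab c by simp
next
  case (Cons x xs)
  have "length (filter (\<lambda>y. fst y < fst x) (xs @ b # a # ys)) = length (filter (\<lambda>y. fst y < fst x) (xs @ a # b # ys))"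
    by simp
  thus ?case using Cons.IH[of "pre @ [fst x]"] by simp
qed

lemma Gf_sorted0:
  "sorted_wrt (\<lambda>x y. fst x < fst y) w \<Longrightarrow> (\<forall>x\<in>set w. snd x = 0) \<Longrightarrow> Gf pre w = 0"
proof (induction w arbitrary: pre)
  case Nil thus ?case by simp
next
  case (Cons x xs)
  have "filter (\<lambda>y. fst y < fst x) xs = []" using Cons.prems(1) by (auto simp: filter_empty_conv)
  thus ?case using Cons by simp
qed

lemma Gf_zero:
  "Gf pre w = 0 \<Longrightarrow> distinct (map fst w) \<Longrightarrow> sorted_wrt (\<lambda>x y. fst x < fst y) w \<and> (\<forall>x\<in>set w. snd x = 0)"
proof (induction w arbitrary: pre)
  case Nil thus ?case by simp
next
  case (Cons x xs)
  have f: "filter (\<lambda>y. fst y < fst x) xs = []" and z: "snd x = 0" and r: "Gf (pre @ [fst x]) xs = 0"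
    using Cons.prems(1) by (auto split: if_splits)
  have "\<forall>y\<in>set xs. fst x < fst y"
  proof
    fix y assume y: "y \<in> set xs"
    hence "\<not> fst y < fst x" using f by (auto simp: filter_empty_conv)
    moreover have "fst y \<noteq> fst x" using Cons.prems(2) y by (auto simp: image_iff)
    ultimately show "fst x < fst y" by simp
  qed
  thus ?case using Cons.IH[OF r] Cons.prems(2) z by simp
qed

lemma Gf_ins:
  "(\<forall>v\<in>set pre. v < N) \<Longrightarrow> (\<forall>x\<in>set (xs @ ys). fst x < N) \<Longrightarrow>
   Gf pre (xs @ (N, e) # ys) = Gf pre (xs @ ys) + length ys + (if 0 < e then 2 * (length pre + length xs) + e else 0)"
proof (induction xs arbitrary: pre)
  case Nil
  have c: "Gf (pre @ [N]) ys = Gf pre ys" by (rule Gf_pre_cong) (use Nil.prems in auto)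
  have "filter (\<lambda>y. fst y < N) ys = ys" using Nil.prems by (simp add: filter_id_conv)
  moreover have "filter (\<lambda>y. y < N) pre = pre" using Nil.prems by (simp add: filter_id_conv)
  ultimately show ?case using c by simp
next
  case (Cons x xs)
  have xN: "fst x < N" using Cons.prems by simp
  have IH: "Gf (pre @ [fst x]) (xs @ (N, e) # ys) = Gf (pre @ [fst x]) (xs @ ys) + length ys +
      (if 0 < e then 2 * (length (pre @ [fst x]) + length xs) + e else 0)"
    by (rule Cons.IH) (use Cons.prems xN in auto)
  have "length (filter (\<lambda>y. fst y < fst x) (xs @ (N, e) # ys)) = length (filter (\<lambda>y. fst y < fst x) (xs @ ys))"
    using xN by simp
  thus ?case using IH by simp
qed

lemma cid_nth: "k < n \<Longrightarrow> cid n ! k = (Suc k, 0)"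
  by (simp add: cid_def nth_map del: upt_Suc)

lemma cid_len: "length (cid n) = n" by (simp add: cid_def)

lemma cid_in: "0 < r \<Longrightarrow> cid n \<in> cperms r n"
proof -
  assume r: "0 < r"
  have m: "map fst (cid n) = [1..<n+1]" by (simp add: cid_def comp_def del: upt_Suc)
  have s: "set (map fst (cid n)) = {1..n}" unfolding m by auto
  have d: "distinct (map fst (cid n))" unfolding m by simp
  have c: "\<forall>x\<in>set (cid n). snd x < r" using r by (auto simp: cid_def simp del: upt_Suc)
  show ?thesis unfolding cperms_def mem_Collect_eq using s d c cid_len by blast
qed

lemma cmul_geni:
  assumes w: "w \<in> cperms r n" and i: "1 \<le> i" "i < n"
  shows "cmul r w (geni n i) = w[i-1 := w!i, i := w!(i-1)]"
proof (rule nth_equalityI)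
  have lw: "length w = n" using w by (rule cp_len)
  show "length (cmul r w (geni n i)) = length (w[i-1 := w!i, i := w!(i-1)])"
    by (simp add: cmul_def geni_def cid_len lw)
  fix k assume "k < length (cmul r w (geni n i))"
  hence k: "k < n" by (simp add: cmul_def geni_def cid_len)
  have g: "geni n i ! k = (if k = i then (i, 0) else if k = i - 1 then (i + 1, 0) else (Suc k, 0))"
    using k i by (simp add: geni_def nth_list_update cid_len cid_nth)
  have col: "\<And>j. j < n \<Longrightarrow> snd (w!j) mod r = snd (w!j)" using cp_col[OF w] by simp
  have lg: "length (geni n i) = n" by (simp add: geni_def cid_len)
  have cm: "cmul r w (geni n i) ! k = (fst (w ! (fst (geni n i ! k) - 1)), (snd (w ! (fst (geni n i ! k) - 1)) + snd (geni n i ! k)) mod r)"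
    using k lg by (simp add: cmul_def split_beta)
  show "cmul r w (geni n i) ! k = w[i-1 := w!i, i := w!(i-1)] ! k"
    unfolding cm g using k i col[of k] col[of i] col[of "i-1"] lw
    by (auto simp: nth_list_update prod_eq_iff)
qed

lemma cmul_gen0:
  assumes w: "w \<in> cperms r n" and n: "1 \<le> n"
  shows "cmul r w (gen0 r n) = w[0 := (fst (w!0), (snd (w!0) + 1) mod r)]"
proof (rule nth_equalityI)
  have lw: "length w = n" using w by (rule cp_len)
  show "length (cmul r w (gen0 r n)) = length (w[0 := (fst (w!0), (snd (w!0) + 1) mod r)])"
    by (simp add: cmul_def gen0_def cid_len lw)
  fix k assume "k < length (cmul r w (gen0 r n))"
  hence k: "k < n" by (simp add: cmul_def gen0_def cid_len)
  have g: "gen0 r n ! k = (if k = 0 then (1, 1 mod r) else (Suc k, 0))"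
    using k n by (simp add: gen0_def nth_list_update cid_len cid_nth)
  have col: "snd (w!k) mod r = snd (w!k)" using cp_col[OF w k] by simp
  have lg: "length (gen0 r n) = n" by (simp add: gen0_def cid_len)
  have cm: "cmul r w (gen0 r n) ! k = (fst (w ! (fst (gen0 r n ! k) - 1)), (snd (w ! (fst (gen0 r n ! k) - 1)) + snd (gen0 r n ! k)) mod r)"
    using k lg by (simp add: cmul_def split_beta)
  show "cmul r w (gen0 r n) ! k = w[0 := (fst (w!0), (snd (w!0) + 1) mod r)] ! k"
    unfolding cm g using k n col lw by (auto simp: nth_list_update prod_eq_iff mod_add_right_eq)
qed

lemma swap_in:
  assumes w: "w \<in> cperms r n" and i: "i < n" "j < n"
  shows "w[i := w!j, j := w!i] \<in> cperms r n"
proof -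
  have lw: "length w = n" using w by (rule cp_len)
  define L where "L = map fst w"
  have mf: "map fst (w[i := w!j, j := w!i]) = L[i := L ! j, j := L ! i]"
    using i lw by (simp add: map_update L_def)
  have dL: "distinct L" "set L = {1..n}" "length L = n" using w by (auto simp: cperms_iff L_def)
  have "distinct (map fst (w[i := w!j, j := w!i]))" "set (map fst (w[i := w!j, j := w!i])) = {1..n}"
    unfolding mf using i dL by auto
  moreover have "\<forall>k<n. snd (w[i := w!j, j := w!i] ! k) < r"
    using cp_col[OF w] i lw by (auto simp: nth_list_update)
  ultimately show ?thesis using lw by (simp add: cperms_iff)
qed

lemma col0_in:
  assumes w: "w \<in> cperms r n" and n: "1 \<le> n" and c: "c < r"
  shows "w[0 := (fst (w!0), c)] \<in> cperms r n"
proof -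
  have lw: "length w = n" using w by (rule cp_len)
  have mf: "map fst (w[0 := (fst (w!0), c)]) = map fst w"
    using n lw by (simp add: map_update list_update_same_conv)
  moreover have "\<forall>k<n. snd (w[0 := (fst (w!0), c)] ! k) < r"
    using cp_col[OF w] c n lw by (auto simp: nth_list_update)
  ultimately show ?thesis using w lw by (simp add: cperms_iff)
qed

lemma swap_decomp:
  assumes "Suc i < length w"
  shows "w = take i w @ w!i # w!(Suc i) # drop (Suc (Suc i)) w \<and>
         w[i := w!(Suc i), Suc i := w!i] = take i w @ w!(Suc i) # w!i # drop (Suc (Suc i)) w"
proof -
  have e1: "w = take i w @ w!i # w!(Suc i) # drop (Suc (Suc i)) w"
    using assms by (metis Cons_nth_drop_Suc Suc_lessD append_take_drop_id)
  have "w[i := w!(Suc i), Suc i := w!i] = (take i w @ w!i # w!(Suc i) # drop (Suc (Suc i)) w)[i := w!(Suc i), Suc i := w!i]"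
    using e1 by simp
  also have "\<dots> = take i w @ w!(Suc i) # w!i # drop (Suc (Suc i)) w"
    using assms by (simp add: list_update_append)
  finally show ?thesis using e1 by simp
qed

lemma swap_swap:
  assumes "Suc i < length w"
  shows "(w[i := w!(Suc i), Suc i := w!i])[i := w[i := w!(Suc i), Suc i := w!i] ! (Suc i),
           Suc i := w[i := w!(Suc i), Suc i := w!i] ! i] = w"
  using assms by (auto intro!: nth_equalityI simp: nth_list_update)

lemma Gf_swap_cases:
  assumes j: "Suc j < length w"
  shows "(fst (w!j) < fst (w!Suc j) \<longrightarrow>
           Gf pre (w[j := w!Suc j, Suc j := w!j]) + 2 * (if 0 < snd (w!Suc j) then 1 else 0) = Gf pre w + 1) \<and>
         (fst (w!Suc j) < fst (w!j) \<longrightarrow>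
           Gf pre w + 2 * (if 0 < snd (w!j) then 1 else 0) = Gf pre (w[j := w!Suc j, Suc j := w!j]) + 1)"
proof -
  note d = swap_decomp[OF j]
  define xs where "xs = take j w"
  define ys where "ys = drop (Suc (Suc j)) w"
  have e1: "w = xs @ w!j # w!Suc j # ys" and e2: "w[j := w!Suc j, Suc j := w!j] = xs @ w!Suc j # w!j # ys"
    using d by (simp_all add: xs_def ys_def)
  show ?thesis
  proof (intro conjI impI)
    assume "fst (w!j) < fst (w!Suc j)"
    from Gf_swap[OF this, of pre xs ys] show "Gf pre (w[j := w!Suc j, Suc j := w!j]) + 2 * (if 0 < snd (w!Suc j) then 1 else 0) = Gf pre w + 1"
      unfolding e2 by (subst e1) simp
  next
    assume "fst (w!Suc j) < fst (w!j)"
    from Gf_swap[OF this, of pre xs ys] show "Gf pre w + 2 * (if 0 < snd (w!j) then 1 else 0) = Gf pre (w[j := w!Suc j, Suc j := w!j]) + 1"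
      unfolding e2 by (subst e1) simp
  qed
qed

lemma Gf_head: "Gf [] ((v, z) # ys) = length (filter (\<lambda>y. fst y < v) ys) + (if 0 < z then z else 0) + Gf [v] ys"
  by simp

lemma F_step_le:
  assumes r: "0 < r" and n: "1 \<le> n" and w: "w \<in> cperms r n" and g: "g \<in> gens r n"
  shows "cmul r w g \<in> cperms r n \<and> Gf [] (cmul r w g) \<le> Gf [] w + 1"
proof -
  have lw: "length w = n" using w by (rule cp_len)
  show ?thesis
  proof (cases "g = gen0 r n")
    case True
    define z' where "z' = (snd (w!0) + 1) mod r"
    have cm: "cmul r w g = w[0 := (fst (w!0), z')]" using cmul_gen0[OF w n] True by (simp add: z'_def)
    have inn: "cmul r w g \<in> cperms r n" unfolding cm by (rule col0_in[OF w n]) (simp add: z'_def r)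
    obtain x ys where wx: "w = x # ys" using n lw by (cases w) auto
    have z: "snd x < r" using cp_col[OF w, of 0] n wx by simp
    have "(if 0 < z' then z' else 0) \<le> (if 0 < snd x then snd x else 0) + 1"
    proof (cases "snd x + 1 < r")
      case True thus ?thesis using wx by (simp add: z'_def)
    next
      case False hence "snd x + 1 = r" using z by simp
      thus ?thesis using wx by (simp add: z'_def)
    qed
    moreover have "cmul r w g = (fst x, z') # ys" using cm wx by simp
    ultimately have "Gf [] (cmul r w g) \<le> Gf [] w + 1" using wx by (cases x) (simp only: Gf_head, auto split: if_splits)
    thus ?thesis using inn by simp
  next
    case False
    then obtain i where i: "g = geni n i" "1 \<le> i" "i < n" using g by (auto simp: gens_def)
    define j where "j = i - 1"
    have ij: "i = Suc j" using i by (simp add: j_def)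
    have cm: "cmul r w g = w[j := w!Suc j, Suc j := w!j]" using cmul_geni[OF w i(2,3)] i(1) ij by simp
    have jn: "Suc j < length w" using i lw ij by simp
    have inn: "cmul r w g \<in> cperms r n" unfolding cm by (rule swap_in[OF w]) (use jn lw in auto)
    have ne: "fst (w!j) \<noteq> fst (w!Suc j)" using cp_inj[OF w, of j "Suc j"] jn lw by auto
    have "Gf [] (cmul r w g) \<le> Gf [] w + 1"
      unfolding cm using Gf_swap_cases[OF jn, of "[]"] ne by (cases "fst (w!j) < fst (w!Suc j)") (auto split: if_splits)
    thus ?thesis using inn by simp
  qed
qed

lemma F_zero_id:
  assumes w: "w \<in> cperms r n" and z: "Gf [] w = 0"
  shows "w = cid n"
proof -
  have lw: "length w = n" using w by (rule cp_len)
  have sz: "sorted_wrt (\<lambda>x y. fst x < fst y) w" "\<forall>x\<in>set w. snd x = 0"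
    using Gf_zero[OF z cp_dist[OF w]] by auto
  have "sorted_wrt (<) (map fst w)" using sz(1) by (simp add: sorted_wrt_map)
  hence "sorted (map fst w)" "distinct (map fst w)" by (auto simp: strict_sorted_iff)
  moreover have "sorted [1..<n+1]" "distinct [1..<n+1]" by (simp_all del: upt_Suc)
  moreover have "set (map fst w) = set [1..<n+1]" using w by (auto simp: cperms_iff)
  ultimately have mf: "map fst w = [1..<n+1]" by (rule sorted_distinct_set_unique)
  show ?thesis
  proof (rule nth_equalityI)
    show "length w = length (cid n)" by (simp add: lw cid_len)
    fix k assume "k < length w"
    hence k: "k < n" using lw by simp
    have "fst (w!k) = Suc k" using arg_cong[OF mf, of "\<lambda>l. l ! k"] k lw by (simp del: upt_Suc)
    moreover have "snd (w!k) = 0" using sz(2) k lw by auto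
    ultimately show "w ! k = cid n ! k" using cid_nth[OF k] by (simp add: prod_eq_iff)
  qed
qed

lemma F_cid: "Gf [] (cid n) = 0"
proof (rule Gf_sorted0)
  show "sorted_wrt (\<lambda>x y. fst x < fst y) (cid n)"
    by (simp add: cid_def sorted_wrt_map del: upt_Suc)
  show "\<forall>x\<in>set (cid n). snd x = 0" by (auto simp: cid_def simp del: upt_Suc)
qed

lemma F_step_down:
  assumes r: "0 < r" and n: "1 \<le> n" and w: "w \<in> cperms r n" and pos: "0 < Gf [] w"
  shows "\<exists>w' g. w' \<in> cperms r n \<and> g \<in> gens r n \<and> cmul r w' g = w \<and> Gf [] w' + 1 = Gf [] w"
proof -
  have lw: "length w = n" using w by (rule cp_len)
  show ?thesis
  proof (cases "0 < snd (w!0)")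
    case True
    define w' where "w' = w[0 := (fst (w!0), snd (w!0) - 1)]"
    have z: "snd (w!0) < r" using cp_col[OF w, of 0] n by simp
    have W': "w' \<in> cperms r n" unfolding w'_def by (rule col0_in[OF w n]) (use z in simp)
    have "cmul r w' (gen0 r n) = w'[0 := (fst (w'!0), (snd (w'!0) + 1) mod r)]" by (rule cmul_gen0[OF W' n])
    also have "\<dots> = w" using True z n lw by (simp add: w'_def)
    finally have cm: "cmul r w' (gen0 r n) = w" .
    obtain x ys where wx: "w = x # ys" using n lw by (cases w) auto
    have "w' = (fst x, snd x - 1) # ys" using wx by (simp add: w'_def)
    hence "Gf [] w' + 1 = Gf [] w" using wx True by (cases x) (simp only: Gf_head, auto)
    thus ?thesis using W' cm by (intro exI[of _ w'] exI[of _ "gen0 r n"]) (auto simp: gens_def)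
  next
    case False
    hence z0: "snd (w!0) = 0" by simp
    show ?thesis
    proof (cases "\<exists>j. Suc j < n \<and> ((fst (w!j) < fst (w!Suc j) \<and> 0 < snd (w!Suc j)) \<or>
                                    (fst (w!Suc j) < fst (w!j) \<and> snd (w!j) = 0))")
      case True
      then obtain j where j: "Suc j < n" "(fst (w!j) < fst (w!Suc j) \<and> 0 < snd (w!Suc j)) \<or>
                                    (fst (w!Suc j) < fst (w!j) \<and> snd (w!j) = 0)" by blast
      define w' where "w' = w[j := w!Suc j, Suc j := w!j]"
      have jn: "Suc j < length w" using j lw by simp
      have W': "w' \<in> cperms r n" unfolding w'_def by (rule swap_in[OF w]) (use j in auto)
      have lw': "length w' = n" using W' by (rule cp_len)
      have "cmul r w' (geni n (Suc j)) = w'[j := w'!Suc j, Suc j := w'!j]"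
        using cmul_geni[OF W', of "Suc j"] j by simp
      also have "\<dots> = w" unfolding w'_def by (rule swap_swap[OF jn])
      finally have cm: "cmul r w' (geni n (Suc j)) = w" .
      have "Gf [] w' + 1 = Gf [] w" using Gf_swap_cases[OF jn, of "[]"] j unfolding w'_def by auto
      thus ?thesis using W' cm j by (intro exI[of _ w'] exI[of _ "geni n (Suc j)"]) (auto simp: gens_def)
    next
      case False
      hence nogood: "\<And>j. Suc j < n \<Longrightarrow> fst (w!j) < fst (w!Suc j) \<Longrightarrow> snd (w!Suc j) = 0"
        "\<And>j. Suc j < n \<Longrightarrow> fst (w!Suc j) < fst (w!j) \<Longrightarrow> snd (w!j) \<noteq> 0" by auto
      have adj: "\<And>k. snd (w!k) = 0 \<Longrightarrow> Suc k < n \<Longrightarrow> fst (w!k) < fst (w!Suc k)"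
      proof -
        fix k assume k: "snd (w!k) = 0" "Suc k < n"
        have "fst (w!k) \<noteq> fst (w!Suc k)" using cp_inj[OF w, of k "Suc k"] k by auto
        thus "fst (w!k) < fst (w!Suc k)" using nogood(2)[OF k(2)] k(1) by linarith
      qed
      have zall: "\<And>k. k < n \<Longrightarrow> snd (w!k) = 0"
      proof -
        fix k show "k < n \<Longrightarrow> snd (w!k) = 0"
        proof (induction k)
          case 0 thus ?case using z0 by simp
        next
          case (Suc k)
          hence "snd (w!k) = 0" by simp
          hence "fst (w!k) < fst (w!Suc k)" using adj Suc.prems by simp
          thus ?case using nogood(1) Suc.prems by simp
        qed
      qed
      have "sorted_wrt (\<lambda>x y. fst x < fst y) w"
      proof (subst sorted_wrt_iff_nth_Suc_transp)
        show "transp (\<lambda>x y. fst (x::nat \<times> nat) < fst y)" by (auto simp: transp_def)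
        show "\<forall>i. Suc i < length w \<longrightarrow> fst (w!i) < fst (w!Suc i)"
          using adj zall lw by simp
      qed
      moreover have "\<forall>x\<in>set w. snd x = 0"
      proof
        fix x assume "x \<in> set w"
        then obtain i where "i < length w" "x = w ! i" by (metis in_set_conv_nth)
        thus "snd x = 0" using zall lw by simp
      qed
      ultimately have "Gf [] w = 0" by (rule Gf_sorted0)
      thus ?thesis using pos by simp
    qed
  qed
qed

lemma fold_in:
  assumes r: "0 < r" and n: "1 \<le> n" and gs: "set gs \<subseteq> gens r n"
  shows "foldl (cmul r) (cid n) gs \<in> cperms r n \<and> Gf [] (foldl (cmul r) (cid n) gs) \<le> length gs"
  using gs
proof (induction gs rule: rev_induct)
  case Nil thus ?case using cid_in[OF r] F_cid by simp
next
  case (snoc g gs)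
  hence IH: "foldl (cmul r) (cid n) gs \<in> cperms r n" "Gf [] (foldl (cmul r) (cid n) gs) \<le> length gs" by auto
  have "g \<in> gens r n" using snoc.prems by simp
  from F_step_le[OF r n IH(1) this] IH(2) show ?case by simp
qed

lemma fold_ex:
  assumes r: "0 < r" and n: "1 \<le> n"
  shows "w \<in> cperms r n \<Longrightarrow> Gf [] w = k \<Longrightarrow> \<exists>gs. length gs = k \<and> set gs \<subseteq> gens r n \<and> foldl (cmul r) (cid n) gs = w"
proof (induction k arbitrary: w)
  case 0
  hence "w = cid n" using F_zero_id by blast
  thus ?case by (intro exI[of _ "[]"]) simp
next
  case (Suc k)
  obtain w' g where wg: "w' \<in> cperms r n" "g \<in> gens r n" "cmul r w' g = w" "Gf [] w' + 1 = Gf [] w"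
    using F_step_down[OF r n Suc.prems(1)] Suc.prems(2) by auto
  obtain gs where gs: "length gs = k" "set gs \<subseteq> gens r n" "foldl (cmul r) (cid n) gs = w'"
    using Suc.IH[OF wg(1)] wg(4) Suc.prems(2) by auto
  show ?case using gs wg by (intro exI[of _ "gs @ [g]"]) simp
qed

lemma clen_F:
  assumes r: "0 < r" and n: "1 \<le> n" and w: "w \<in> cperms r n"
  shows "clen r n w = Gf [] w"
  unfolding clen_def
proof (rule Least_equality)
  show "\<exists>gs. length gs = Gf [] w \<and> set gs \<subseteq> gens r n \<and> foldl (cmul r) (cid n) gs = w"
    using fold_ex[OF r n w] by simp
  fix k assume "\<exists>gs. length gs = k \<and> set gs \<subseteq> gens r n \<and> foldl (cmul r) (cid n) gs = w"
  then obtain gs where "length gs = k" "set gs \<subseteq> gens r n" "foldl (cmul r) (cid n) gs = w" by blast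
  thus "Gf [] w \<le> k" using fold_in[OF r n] by metis
qed

lemma cperms0: "w \<in> cperms r 0 \<longleftrightarrow> w = []"
  by (auto simp: cperms_def)

lemma acode_len: "w \<in> cperms r n \<Longrightarrow> length (acode w) = n"
proof (induction n arbitrary: w)
  case 0 thus ?case by (simp add: cperms0 acode_def)
next
  case (Suc m)
  obtain a p e where a: "a \<in> cperms r m" "1 \<le> p" "p \<le> Suc m" "e < r" "w = insA a p e"
    using decompA[OF Suc.prems] by blast
  show ?case using acode_insA[OF a(1-4)] Suc.IH[OF a(1)] a(5) by simp
qed

lemma Gf_acode:
  "w \<in> cperms r n \<Longrightarrow> Gf [] w = (\<Sum>j = 1..n. let (c, e) = acode w ! (j - 1) in
                 j - c + (if e > 0 then 2 * (c - 1) + e else 0))"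
proof (induction n arbitrary: w)
  case 0 thus ?case by (simp add: cperms0)
next
  case (Suc m)
  obtain a p e where a: "a \<in> cperms r m" "1 \<le> p" "p \<le> Suc m" "e < r" "w = insA a p e"
    using decompA[OF Suc.prems] by blast
  have la: "length a = m" using a(1) by (rule cp_len)
  have lac: "length (acode a) = m" by (rule acode_len[OF a(1)])
  have ac: "acode w = acode a @ [(p, e)]" using acode_insA[OF a(1-4)] a(5) by simp
  define h where "h = (\<lambda>j ce. let (c, e) = ce in j - c + (if e > 0 then 2 * (c - 1) + (e::nat) else 0))"
  have "(\<Sum>j = 1..Suc m. h j (acode w ! (j - 1))) = (\<Sum>j = 1..m. h j (acode w ! (j - 1))) + h (Suc m) (acode w ! m)"
    by simp
  also have "(\<Sum>j = 1..m. h j (acode w ! (j - 1))) = (\<Sum>j = 1..m. h j (acode a ! (j - 1)))"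
    by (rule sum.cong) (auto simp: ac nth_append lac)
  also have "acode w ! m = (p, e)" using ac lac by (metis nth_append_length)
  finally have S: "(\<Sum>j = 1..Suc m. h j (acode w ! (j - 1))) = Gf [] a + h (Suc m) (p, e)"
    using Suc.IH[OF a(1)] by (simp add: h_def)
  have vals: "\<forall>x\<in>set (take (p-1) a @ drop (p-1) a). fst x < Suc m"
  proof
    fix x assume "x \<in> set (take (p-1) a @ drop (p-1) a)"
    hence "x \<in> set a" by simp
    then obtain i where "i < m" "x = a ! i" using la by (metis in_set_conv_nth)
    thus "fst x < Suc m" using cp_val[OF a(1)] by fastforce
  qed
  have "Gf [] w = Gf [] (take (p-1) a @ (Suc m, e) # drop (p-1) a)" using a(5) la by (simp add: insA_def)
  also have "\<dots> = Gf [] a + length (drop (p-1) a) + (if 0 < e then 2 * (length ([]::nat list) + length (take (p-1) a)) + e else 0)"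
    using Gf_ins[of "[]" "Suc m" "take (p-1) a" "drop (p-1) a" e] vals by simp
  also have "\<dots> = Gf [] a + h (Suc m) (p, e)"
  proof -
    have "length (take (p-1) a) = p - 1" "length (drop (p-1) a) = Suc m - p" using la a(2,3) by auto
    thus ?thesis by (simp add: h_def)
  qed
  finally show ?case using S by (simp add: h_def)
qed

lemma sor_phi:
  assumes r: "0 < r" and w: "w \<in> cperms r n"
  shows "sor r (phi r n w) = Gf [] w"
proof -
  have P: "phi r n w \<in> cperms r n" "bcode r (phi r n w) = acode w" using phi_props[OF r w] by auto
  have "length (phi r n w) = n" using P(1) by (rule cp_len)
  thus ?thesis unfolding sor_def P(2) Gf_acode[OF w] by simp
qed

lemma stats:
  assumes r: "0 < r"
  shows "w \<in> cperms r n \<Longrightarrow> \<forall>t<r. Rmil t w = Cyc r (cneg r t) (phi r n w) \<and>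
            LRM t w = LRM (cneg r t) (phi r n w) \<and>
            (1 \<le> n \<longrightarrow> Lmil t w = Lmic r (cneg r t) (phi r n w))"
proof (induction n arbitrary: w)
  case 0
  hence w0: "w = []" by (simp add: cperms0)
  have "phi r 0 w \<in> cperms r 0" using phi_props[OF r "0.prems"] by simp
  hence "phi r 0 w = []" by (simp add: cperms0)
  thus ?case using w0 by (simp add: Rmil_def Cyc_def LRM_def)
next
  case (Suc m)
  obtain a p e where a: "a \<in> cperms r m" "1 \<le> p" "p \<le> Suc m" "e < r" "w = insA a p e"
    using decompA[OF Suc.prems] by blast
  have ph: "phi r (Suc m) w = insB r (phi r m a) p e" using phi_insA[OF a(1-4) r] a(5) by simp
  have PA: "phi r m a \<in> cperms r m" using phi_props[OF r a(1)] by simp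
  note IH = Suc.IH[OF a(1)]
  show ?case
  proof (intro allI impI conjI)
    fix t assume t: "t < r"
    have ce: "cneg r e = cneg r t \<longleftrightarrow> e = t" by (rule cneg_inj[OF a(4) t])
    show "Rmil t w = Cyc r (cneg r t) (phi r (Suc m) w)"
      unfolding ph unfolding a(5) Rmil_insA[OF a(1-4)] Cyc_insB[OF PA a(2-4) r] using IH t ce by simp
    show "LRM t w = LRM (cneg r t) (phi r (Suc m) w)"
      unfolding ph unfolding a(5) LRM_insA[OF a(1-4)] LRM_insB[OF PA a(2-4) r] using IH t ce by simp
    show "Lmil t w = Lmic r (cneg r t) (phi r (Suc m) w)"
    proof (cases "m = 0")
      case True
      hence a0: "a = []" and pa: "phi r m a = []" and p1: "p = 1" using a(1-3) PA by (auto simp: cperms0)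
      have "insB r [] 1 e = [(1, cneg r e)]" by (simp add: insB_def)
      hence "Lmic r (cneg r t) (phi r (Suc m) w) = (if cneg r e = cneg r t then {1} else {})"
        unfolding ph unfolding pa p1 using Lmic_base[OF cneg_lt[OF r] r] by simp
      moreover have "Lmil t w = Lmil t [] \<union> (if e = t then {1} else {})"
        unfolding a(5) using Lmil_insA[OF a(1-4)] a0 p1 True by simp
      moreover have "Lmil t [] = {}" by (simp add: Lmil_def)
      ultimately show ?thesis using ce by simp
    next
      case False
      hence m1: "1 \<le> m" by simp
      show ?thesis
        unfolding ph unfolding a(5) Lmil_insA[OF a(1-4)] Lmic_insB[OF PA m1 a(2-4) r] using IH t ce m1 by simp
    qed
  qed
qed

theorem theorem4p1:
  fixes r n :: nat and w :: cword
  assumes "0 < r" and "1 \<le> n" and "w \<in> cperms r n"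
  shows "clen r n w = sor r (phi r n w) \<and>
         (\<forall>t < r. Rmil t w = Cyc r (cneg r t) (phi r n w) \<and>
                  Lmil t w = Lmic r (cneg r t) (phi r n w) \<and>
                  Lmal t w = Lmal (cneg r t) (phi r n w) \<and>
                  Lmap t w = Lmap (cneg r t) (phi r n w))"
proof -
  have "clen r n w = sor r (phi r n w)"
    using clen_F[OF assms] sor_phi[OF assms(1) assms(3)] by simp
  moreover have "\<forall>t < r. Rmil t w = Cyc r (cneg r t) (phi r n w) \<and>
                  Lmil t w = Lmic r (cneg r t) (phi r n w) \<and>
                  Lmal t w = Lmal (cneg r t) (phi r n w) \<and>
                  Lmap t w = Lmap (cneg r t) (phi r n w)"
    using stats[OF assms(1) assms(3)] assms(2) by (simp add: Lmal_LRM Lmap_LRM)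
  ultimately show ?thesis by simp
qed

end
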